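(* Let $(k_{i,j})$ satisfy condition (K) and condition (KC). For $\varepsilon>0$ define $$k^\varepsilon(x,y)=\sum_{i=0}^\infty\sum_{j=0}^\infty\frac{k_{i,j}}{\varepsilon}\chi_{[i\varepsilon,(i+1)\varepsilon)}(x)\chi_{[j\varepsilon,(j+1)\varepsilon)}(y),\qquad x,y\ge 0.$$ Then there exist a sequence $\varepsilon_n\to 0$ and a family $(k(\cdot,y))_{y>0}$ of probability measures on $[0,\infty)$ such that: (1) $k(\cdot,y)$ is supported in $[0,y]$, is symmetric (its image under $x\mapsto y-x$ equals itself), and $2\int x\,k(dx,y)=y$; (2) $y\mapsto k(\cdot,y)$ is continuous from $(0,\infty)$ into the bounded Radon measures on $[0,\infty)$ with the weak-$\star$ topology; (3) for every $y>0$, the probability measures $k^{\varepsilon_n}(x,y)\,dx$ converge weakly (in law) to $k(\cdot,y)$; (4) for every $\varphi\in C_c^\infty((0,\infty))$, setting $\phi^{\varepsilon}(y)=\int_0^y k^{\varepsilon}(x,y)\varphi(x)\,dx$ and $\phi(y)=\int_{[0,y]}\varphi(x)\,k(dx,y)$, one has $\phi^{\varepsilon_n}\to\phi$ uniformly on $[0,R]$ for every $0<R<\infty$.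
   Context: Condition (K): $(k_{i,j})_{i,j\ge 0}$ are real numbers with $k_{i,j}\ge 0$, $k_{i,j}=0$ whenever $i\ge j$ or $i=0$, $k_{i,j}=k_{j-i,j}$ for $1\le i\le j-1$, and $\sum_{i=1}^{j-1}k_{i,j}=1$ for every $j\ge 2$. Condition (KC): there exists $K>0$ such that for all integers $i,j\ge 0$, $\Big|\sum_{p=0}^{i-1}\sum_{r=0}^{p-1}k_{r,j+1}-\sum_{p=0}^{i-1}\sum_{r=0}^{p-1}k_{r,j}\Big|\le K$. $\chi_A$ denotes the indicator function of $A$. *)

theory Defs
  imports "HOL-Probability.Probability"
begin

definition condK :: "(nat \<Rightarrow> nat \<Rightarrow> real) \<Rightarrow> bool" where
  "condK k \<longleftrightarrow>
     (\<forall>i j. 0 \<le> k i j) \<and>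
     (\<forall>i j. (j \<le> i \<or> i = 0) \<longrightarrow> k i j = 0) \<and>
     (\<forall>i j. 1 \<le> i \<and> i \<le> j - 1 \<longrightarrow> k i j = k (j - i) j) \<and>
     (\<forall>j\<ge>2. (\<Sum>i=1..j-1. k i j) = 1)"

definition condKC :: "(nat \<Rightarrow> nat \<Rightarrow> real) \<Rightarrow> bool" where
  "condKC k \<longleftrightarrow>
     (\<exists>K>0. \<forall>i j.
        \<bar>(\<Sum>p<i. \<Sum>r<p. k r (j+1)) - (\<Sum>p<i. \<Sum>r<p. k r j)\<bar> \<le> K)"

definition keps :: "(nat \<Rightarrow> nat \<Rightarrow> real) \<Rightarrow> real \<Rightarrow> real \<Rightarrow> real \<Rightarrow> real" where
  "keps k \<epsilon> x y =
     (if 0 \<le> x \<and> 0 \<le> y then k (nat \<lfloor>x / \<epsilon>\<rfloor>) (nat \<lfloor>y / \<epsilon>\<rfloor>) / \<epsilon> else 0)"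

definition keps_measure :: "(nat \<Rightarrow> nat \<Rightarrow> real) \<Rightarrow> real \<Rightarrow> real \<Rightarrow> real measure" where
  "keps_measure k \<epsilon> y = density lborel (\<lambda>x. ennreal (keps k \<epsilon> x y))"

text \<open>Test functions in C_c^\<infinity>((0,\<infinity>)): infinitely differentiable on the reals,
  vanishing outside a compact interval [a,b] with 0 < a.\<close>
definition smooth_fun :: "(real \<Rightarrow> real) \<Rightarrow> bool" where
  "smooth_fun \<phi> \<longleftrightarrow>
     (\<exists>D :: nat \<Rightarrow> real \<Rightarrow> real. D 0 = \<phi> \<and>
        (\<forall>m x. (D m has_real_derivative D (Suc m) x) (at x)))"

definition Cc_infty_pos :: "(real \<Rightarrow> real) \<Rightarrow> bool" where
  "Cc_infty_pos \<phi> \<longleftrightarrow> smooth_fun \<phi> \<and>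
     (\<exists>a b. 0 < a \<and> a \<le> b \<and> (\<forall>x. x \<notin> {a..b} \<longrightarrow> \<phi> x = 0))"

end

theory Submission
  imports Defs
begin


definition kd :: "(nat \<Rightarrow> nat \<Rightarrow> real) \<Rightarrow> real \<Rightarrow> nat \<Rightarrow> real \<Rightarrow> real" where
  "kd k e J x = (if 0 \<le> x then k (nat \<lfloor>x / e\<rfloor>) J / e else 0)"

definition mud :: "(nat \<Rightarrow> nat \<Rightarrow> real) \<Rightarrow> real \<Rightarrow> nat \<Rightarrow> real measure" where
  "mud k e J = density lborel (\<lambda>x. ennreal (kd k e J x))"

lemma kd_meas[measurable]: "kd k e J \<in> borel_measurable borel"
  unfolding kd_def by measurable

lemma kd_nonneg: "condK k \<Longrightarrow> 0 < e \<Longrightarrow> 0 \<le> kd k e J x"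
  unfolding kd_def condK_def by auto

lemma sets_mud[simp, measurable_cong]: "sets (mud k e J) = sets borel"
  by (simp add: mud_def)

lemma space_mud[simp]: "space (mud k e J) = UNIV"
  by (simp add: mud_def)

lemma keps_measure_mud: "0 \<le> y \<Longrightarrow> keps_measure k e y = mud k e (nat \<lfloor>y / e\<rfloor>)"
  unfolding keps_measure_def mud_def keps_def kd_def by (auto intro!: arg_cong[where f="density lborel"])

lemma grid_cell:
  fixes e x :: real and i :: nat
  assumes e: "0 < e" and x: "0 \<le> x" and ng: "\<forall>m::nat. x \<noteq> real m * e"
  shows "(x \<in> {real i * e .. (real i + 1) * e}) \<longleftrightarrow> i = nat \<lfloor>x / e\<rfloor>"
proof
  assume "x \<in> {real i * e .. (real i + 1) * e}"
  then have 1: "real i \<le> x / e" "x / e \<le> real i + 1" using e by (auto simp: field_simps)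
  have "x \<noteq> real (Suc i) * e" using ng by blast
  then have "x / e \<noteq> real i + 1" using e by (auto simp: field_simps)
  with 1 have "x / e < real i + 1" by simp
  with 1 have "\<lfloor>x / e\<rfloor> = int i" by (simp add: floor_eq_iff)
  then show "i = nat \<lfloor>x / e\<rfloor>" by simp
next
  assume "i = nat \<lfloor>x / e\<rfloor>"
  moreover have "0 \<le> x / e" using e x by simp
  ultimately have "real i = of_int \<lfloor>x / e\<rfloor>" by simp
  then have "real i \<le> x / e" "x / e < real i + 1" by linarith+
  then show "x \<in> {real i * e .. (real i + 1) * e}" using e by (auto simp: field_simps)
qed

lemma AE_nongrid: "0 < e \<Longrightarrow> AE x in lborel. \<forall>m::nat. x \<noteq> real m * e"
proof -
  have "countable (range (\<lambda>m::nat. real m * e))" by simp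
  then have "range (\<lambda>m::nat. real m * e) \<in> null_sets lborel"
    by (rule countable_imp_null_set_lborel)
  then show ?thesis by (rule AE_I') auto
qed

lemma mud_integral:
  fixes g :: "real \<Rightarrow> real"
  assumes K: "condK k" and e: "0 < e"
    and g[measurable]: "g \<in> borel_measurable borel"
    and B: "\<And>x. 0 \<le> x \<Longrightarrow> x \<le> real J * e \<Longrightarrow> \<bar>g x\<bar> \<le> B"
  shows "integral\<^sup>L (mud k e J) g =
     (\<Sum>i<J. k i J / e * integral\<^sup>L lborel (\<lambda>x. indicator {real i * e .. (real i + 1) * e} x * g x))"
proof -
  have int: "integrable lborel (\<lambda>x. indicator {real i * e .. (real i + 1) * e} x * g x)" if "i < J" for i
  proof (rule integrableI_bounded_set[where A="{real i * e .. (real i + 1) * e}" and B=B])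
    show "AE x in lborel. x \<in> {real i * e..(real i + 1) * e} \<longrightarrow>
        norm (indicator {real i * e..(real i + 1) * e} x * g x) \<le> B"
    proof (intro AE_I2 impI)
      fix x assume x: "x \<in> {real i * e..(real i + 1) * e}"
      then have "0 \<le> x" using e by (auto intro: order_trans[rotated])
      moreover have "x \<le> real J * e"
      proof -
        have "real i + 1 \<le> real J" using that by linarith
        then have "(real i + 1) * e \<le> real J * e" using e by (intro mult_right_mono) auto
        then show ?thesis using x by auto
      qed
      ultimately show "norm (indicator {real i * e..(real i + 1) * e} x * g x) \<le> B"
        using B x by auto
    qed
  qed (auto simp: emeasure_lborel_Icc_eq)
  have "integral\<^sup>L (mud k e J) g = integral\<^sup>L lborel (\<lambda>x. kd k e J x *\<^sub>R g x)"
    unfolding mud_def by (rule integral_density) (auto simp: kd_nonneg[OF K e])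
  also have "\<dots> = integral\<^sup>L lborel (\<lambda>x. \<Sum>i<J. k i J / e * (indicator {real i * e .. (real i + 1) * e} x * g x))"
  proof (rule integral_cong_AE)
    show "AE x in lborel. kd k e J x *\<^sub>R g x =
      (\<Sum>i<J. k i J / e * (indicator {real i * e..(real i + 1) * e} x * g x))"
      using AE_nongrid[OF e]
    proof eventually_elim
      case (elim x)
      show ?case
      proof (cases "0 \<le> x")
        case False
        have "indicator {real i * e..(real i + 1) * e} x = (0::real)" for i :: nat
        proof -
          have "x < real i * e" using False e by (smt (verit) mult_nonneg_nonneg of_nat_0_le_iff)
          then show ?thesis by simp
        qed
        then show ?thesis using False by (simp add: kd_def)
      next
        case True
        define i0 where "i0 = nat \<lfloor>x / e\<rfloor>"
        have ind: "indicator {real i * e..(real i + 1) * e} x = (if i = i0 then 1 else (0::real))" for i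
          using grid_cell[OF e True elim, of i] unfolding i0_def by (auto simp: indicator_def)
        have "(\<Sum>i<J. k i J / e * (indicator {real i * e..(real i + 1) * e} x * g x))
            = (\<Sum>i<J. if i = i0 then k i0 J / e * g x else 0)"
          by (rule sum.cong) (auto simp: ind)
        also have "\<dots> = (if i0 < J then k i0 J / e * g x else 0)"
          by (simp add: sum.delta)
        also have "\<dots> = kd k e J x *\<^sub>R g x"
          using True K unfolding kd_def condK_def i0_def[symmetric] by auto
        finally show ?thesis by simp
      qed
    qed
  qed auto
  also have "\<dots> = (\<Sum>i<J. k i J / e * integral\<^sup>L lborel (\<lambda>x. indicator {real i * e .. (real i + 1) * e} x * g x))"
    by (subst Bochner_Integration.integral_sum) (auto intro!: int)
  finally show ?thesis .
qed


lemma k_zero: "condK k \<Longrightarrow> J \<le> i \<Longrightarrow> k i J = 0"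
  unfolding condK_def by blast

lemma k_zero0: "condK k \<Longrightarrow> k 0 J = 0"
  unfolding condK_def by blast

lemma k_nonneg: "condK k \<Longrightarrow> 0 \<le> k i J"
  unfolding condK_def by blast

lemma k_le1: assumes K: "condK k" shows "k i J \<le> 1"
proof (cases "2 \<le> J \<and> 1 \<le> i \<and> i \<le> J - 1")
  case True
  have "k i J \<le> (\<Sum>i=1..J-1. k i J)"
    by (rule member_le_sum) (use True k_nonneg[OF K] in auto)
  also have "\<dots> = 1" using K True unfolding condK_def by blast
  finally show ?thesis .
next
  case False
  then have "J \<le> i \<or> i = 0" by auto
  then show ?thesis using k_zero[OF K] k_zero0[OF K] by auto
qed

lemma k_sym: assumes "condK k" "i \<le> J" shows "k i J = k (J - i) J"
proof -
  consider "i = 0" | "i = J" | "1 \<le> i \<and> i \<le> J - 1" using assms(2) by linarith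
  then show ?thesis
  proof cases
    case 1 then show ?thesis using k_zero0[OF assms(1)] k_zero[OF assms(1)] by simp
  next
    case 2 then show ?thesis using k_zero0[OF assms(1)] k_zero[OF assms(1)] by simp
  next
    case 3
    have "\<forall>i j. 1 \<le> i \<and> i \<le> j - 1 \<longrightarrow> k i j = k (j - i) j" using assms(1) unfolding condK_def by blast
    then show ?thesis using 3 by blast
  qed
qed

lemma k_sum: assumes K: "condK k" shows "(\<Sum>i<J. k i J) = (if 2 \<le> J then 1 else 0)"
proof (cases "2 \<le> J")
  case True
  have "{..<J} = insert 0 {1..J-1}" using True by auto
  then have "(\<Sum>i<J. k i J) = k 0 J + (\<Sum>i=1..J-1. k i J)" by simp
  moreover have "(\<Sum>i=1..J-1. k i J) = 1" using K True unfolding condK_def by blast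
  moreover have "k 0 J = 0" using K unfolding condK_def by blast
  ultimately show ?thesis using True by simp
next
  case False
  then have "J = 0 \<or> J = 1" by auto
  then show ?thesis using k_zero[OF K] k_zero0[OF K] by auto
qed

lemma sum_extend_zero:
  fixes f :: "nat \<Rightarrow> real"
  assumes "J \<le> N" "\<And>i. J \<le> i \<Longrightarrow> i < N \<Longrightarrow> f i = 0"
  shows "(\<Sum>i<N. f i) = (\<Sum>i<J. f i)"
  by (rule sum.mono_neutral_right) (use assms in auto)

lemma kd_zero:
  assumes K: "condK k" and e: "0 < e" and x: "x < 0 \<or> real J * e < x"
  shows "kd k e J x = 0"
proof (cases "x < 0")
  case True then show ?thesis by (simp add: kd_def)
next
  case False
  then have "real J < x / e" using x e by (simp add: field_simps)
  then have "J \<le> nat \<lfloor>x / e\<rfloor>" by linarith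
  then show ?thesis using K by (simp add: kd_def k_zero)
qed

lemma kd_le: assumes K: "condK k" and e: "0 < e" shows "kd k e J x \<le> 1 / e"
  using k_le1[OF K] e by (auto simp: kd_def divide_right_mono)

lemma mud_integrable:
  fixes g :: "real \<Rightarrow> real"
  assumes K: "condK k" and e: "0 < e"
    and g[measurable]: "g \<in> borel_measurable borel"
    and B: "\<And>x. 0 \<le> x \<Longrightarrow> x \<le> real J * e \<Longrightarrow> \<bar>g x\<bar> \<le> B"
  shows "integrable (mud k e J) g"
  unfolding mud_def
proof (subst integrable_density)
  show "integrable lborel (\<lambda>x. kd k e J x *\<^sub>R g x)"
  proof (rule integrableI_bounded_set[where A="{0..real J * e}" and B="B / e"])
    show "AE x in lborel. x \<in> {0..real J * e} \<longrightarrow> norm (kd k e J x *\<^sub>R g x) \<le> B / e"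
    proof (intro AE_I2 impI)
      fix x assume x: "x \<in> {0..real J * e}"
      have "norm (kd k e J x *\<^sub>R g x) = kd k e J x * \<bar>g x\<bar>"
        using kd_nonneg[OF K e] by (simp add: abs_mult)
      also have "\<dots> \<le> (1 / e) * B"
        using x B[of x] kd_le[OF K e] kd_nonneg[OF K e] e
        by (intro mult_mono) auto
      finally show "norm (kd k e J x *\<^sub>R g x) \<le> B / e" by simp
    qed
    show "AE x in lborel. x \<notin> {0..real J * e} \<longrightarrow> kd k e J x *\<^sub>R g x = 0"
      using kd_zero[OF K e] by auto
  qed (auto simp: emeasure_lborel_Icc_eq)
qed (auto simp: kd_nonneg[OF K e])

lemma mud_AE: assumes K: "condK k" and e: "0 < e"
  shows "AE x in mud k e J. 0 \<le> x \<and> x \<le> real J * e"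
  unfolding mud_def
proof (subst AE_density, simp, intro AE_I2 impI)
  fix x assume "0 < ennreal (kd k e J x)"
  then have "kd k e J x \<noteq> 0" by auto
  then show "0 \<le> x \<and> x \<le> real J * e" using kd_zero[OF K e, of x J] by linarith
qed

lemma integral_indicator_Icc: "a \<le> b \<Longrightarrow> integral\<^sup>L lborel (\<lambda>x. indicator {a..b} x * (1::real)) = b - a"
  by (simp add: measure_lborel_Icc)

lemma mud_emeasure: assumes K: "condK k" and e: "0 < e"
  shows "emeasure (mud k e J) UNIV = ennreal (\<Sum>i<J. k i J)"
proof -
  have int1: "integrable (mud k e J) (\<lambda>_. 1::real)"
    by (rule mud_integrable[OF K e, where B=1]) auto
  then have int2: "integrable lborel (\<lambda>x. kd k e J x *\<^sub>R (1::real))"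
    unfolding mud_def by (subst (asm) integrable_density) (auto simp: kd_nonneg[OF K e])
  have "emeasure (mud k e J) UNIV = (\<integral>\<^sup>+ x. ennreal (kd k e J x) \<partial>lborel)"
    unfolding mud_def by (subst emeasure_density) auto
  also have "\<dots> = ennreal (integral\<^sup>L lborel (kd k e J))"
    using int2 by (intro nn_integral_eq_integral) (auto simp: kd_nonneg[OF K e])
  also have "integral\<^sup>L lborel (kd k e J) = integral\<^sup>L (mud k e J) (\<lambda>_. 1::real)"
    unfolding mud_def by (subst integral_density) (auto simp: kd_nonneg[OF K e])
  also have "\<dots> = (\<Sum>i<J. k i J / e * integral\<^sup>L lborel (\<lambda>x. indicator {real i * e .. (real i + 1) * e} x * (1::real)))"
    by (rule mud_integral[OF K e, where B=1]) auto
  also have "\<dots> = (\<Sum>i<J. k i J)"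
  proof (rule sum.cong)
    fix i assume "i \<in> {..<J}"
    have "real i * e \<le> (real i + 1) * e" using e by (simp add: field_simps)
    then show "k i J / e * integral\<^sup>L lborel (\<lambda>x. indicator {real i * e .. (real i + 1) * e} x * (1::real)) = k i J"
      using e by (simp add: integral_indicator_Icc field_simps)
  qed simp
  finally show ?thesis .
qed

lemma mud_finite: assumes K: "condK k" and e: "0 < e" shows "finite_measure (mud k e J)"
  by (rule finite_measureI) (simp add: mud_emeasure[OF K e])

lemma mud_measure: assumes K: "condK k" and e: "0 < e"
  shows "measure (mud k e J) UNIV = (if 2 \<le> J then 1 else 0)"
  using mud_emeasure[OF K e, of J] k_sum[OF K, of J]
  by (simp add: measure_def)

lemma mud_prob: assumes K: "condK k" and e: "0 < e" and J: "2 \<le> J"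
  shows "prob_space (mud k e J)"
  by (rule prob_spaceI) (simp add: mud_emeasure[OF K e] k_sum[OF K] J)

lemma mud_real_distribution: assumes K: "condK k" and e: "0 < e" and J: "2 \<le> J"
  shows "real_distribution (mud k e J)"
proof -
  interpret prob_space "mud k e J" by (rule mud_prob[OF K e J])
  show ?thesis by unfold_locales simp
qed

lemma hinge_cell:
  assumes e: "0 < e"
  shows "integral\<^sup>L lborel (\<lambda>x. indicator {real i * e .. (real i + 1) * e} x * max 0 (real m * e - x))
     = (if i < m then e\<^sup>2 * (real m - real i - 1/2) else 0)"
proof (cases "i < m")
  case True
  have le: "real i * e \<le> (real i + 1) * e" using e by (simp add: field_simps)
  have "real i + 1 \<le> real m" using True by linarith
  then have le2: "(real i + 1) * e \<le> real m * e" using e by (intro mult_right_mono) auto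
  have "integral\<^sup>L lborel (\<lambda>x. indicator {real i * e .. (real i + 1) * e} x * max 0 (real m * e - x))
      = integral\<^sup>L lborel (\<lambda>x. indicator {real i * e .. (real i + 1) * e} x *\<^sub>R (real m * e - x))"
    using le2 by (intro Bochner_Integration.integral_cong) (auto simp: indicator_def)
  also have "\<dots> = (real m * e * ((real i + 1) * e) - ((real i + 1) * e)\<^sup>2 / 2)
      - (real m * e * (real i * e) - (real i * e)\<^sup>2 / 2)"
    by (rule integral_FTC_atLeastAtMost[OF le])
       (auto intro!: derivative_eq_intros continuous_intros simp: has_real_derivative_iff_has_vector_derivative[symmetric])
  also have "\<dots> = e\<^sup>2 * (real m - real i - 1/2)"
    by (simp add: power2_eq_square algebra_simps)
  finally show ?thesis using True by simp
next
  case False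
  have "indicator {real i * e .. (real i + 1) * e} x * max 0 (real m * e - x) = 0" for x
  proof -
    have "real m * e \<le> real i * e" using False e by (intro mult_right_mono) auto
    then show ?thesis by (auto simp: indicator_def)
  qed
  then have "(\<lambda>x. indicator {real i * e .. (real i + 1) * e} x * max 0 (real m * e - x)) = (\<lambda>x. 0::real)"
    by (intro ext)
  then show ?thesis using False by simp
qed

definition Phd :: "(nat \<Rightarrow> nat \<Rightarrow> real) \<Rightarrow> real \<Rightarrow> nat \<Rightarrow> real \<Rightarrow> real" where
  "Phd k e J a = integral\<^sup>L (mud k e J) (\<lambda>x. max 0 (a - x))"

definition Qd :: "(nat \<Rightarrow> nat \<Rightarrow> real) \<Rightarrow> nat \<Rightarrow> nat \<Rightarrow> real" where
  "Qd k J m = (\<Sum>i<m. k i J * (real m - real i - 1/2))"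

definition Gd :: "(nat \<Rightarrow> nat \<Rightarrow> real) \<Rightarrow> nat \<Rightarrow> nat \<Rightarrow> real" where
  "Gd k J m = (\<Sum>p<m. \<Sum>r<p. k r J)"

lemma Qd_Gd: "Qd k J m = (Gd k J m + Gd k J (Suc m)) / 2"
proof (induction m)
  case 0 then show ?case by (simp add: Qd_def Gd_def)
next
  case (Suc m)
  have "(\<Sum>i<m. k i J * (real (Suc m) - real i - 1/2)) = (\<Sum>i<m. k i J * (real m - real i - 1/2)) + (\<Sum>i<m. k i J)"
    by (subst sum.distrib[symmetric]) (rule sum.cong, auto simp: algebra_simps)
  moreover have "k m J * (real (Suc m) - real m - 1/2) = k m J / 2" by simp
  ultimately have "Qd k J (Suc m) = Qd k J m + (\<Sum>i<m. k i J) + k m J / 2"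
    unfolding Qd_def by simp
  also have "\<dots> = (Gd k J (Suc m) + Gd k J (Suc (Suc m))) / 2"
    unfolding Suc Gd_def by simp
  finally show ?case .
qed

lemma Phd_grid:
  assumes K: "condK k" and e: "0 < e"
  shows "Phd k e J (real m * e) = e * Qd k J m"
proof -
  have "Phd k e J (real m * e) = (\<Sum>i<J. k i J / e * integral\<^sup>L lborel
      (\<lambda>x. indicator {real i * e .. (real i + 1) * e} x * max 0 (real m * e - x)))"
    unfolding Phd_def
    by (rule mud_integral[OF K e, where B="real m * e"]) (use e in auto)
  also have "\<dots> = (\<Sum>i<J. e * (if i < m then k i J * (real m - real i - 1/2) else 0))"
    using e by (intro sum.cong) (auto simp: hinge_cell power2_eq_square)
  also have "\<dots> = e * (\<Sum>i<J + m. (if i < m then k i J * (real m - real i - 1/2) else 0))"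
    by (subst sum_extend_zero[of J "J + m"]) (auto simp: sum_distrib_left k_zero[OF K])
  also have "(\<Sum>i<J + m. (if i < m then k i J * (real m - real i - 1/2) else 0)) = Qd k J m"
    unfolding Qd_def
    by (subst sum_extend_zero[of m "J + m"]) auto
  finally show ?thesis .
qed

lemma Phd_lip:
  assumes K: "condK k" and e: "0 < e"
  shows "\<bar>Phd k e J a - Phd k e J b\<bar> \<le> \<bar>a - b\<bar>"
proof -
  interpret finite_measure "mud k e J" by (rule mud_finite[OF K e])
  have int: "integrable (mud k e J) (\<lambda>x. max 0 (c - x))" for c
    by (rule mud_integrable[OF K e, where B="\<bar>c\<bar>"]) auto
  have "Phd k e J a - Phd k e J b = integral\<^sup>L (mud k e J) (\<lambda>x. max 0 (a - x) - max 0 (b - x))"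
    unfolding Phd_def by (rule Bochner_Integration.integral_diff[symmetric]) (auto intro: int)
  also have "\<bar>\<dots>\<bar> \<le> integral\<^sup>L (mud k e J) (\<lambda>x. \<bar>a - b\<bar>)"
    by (rule integral_abs_bound_integral) (auto intro!: Bochner_Integration.integrable_diff int)
  also have "\<dots> = measure (mud k e J) UNIV * \<bar>a - b\<bar>" by simp
  also have "\<dots> \<le> \<bar>a - b\<bar>"
    using mud_measure[OF K e, of J] by auto
  finally show ?thesis .
qed

lemma Phd_neg:
  assumes K: "condK k" and e: "0 < e" and a: "a \<le> 0"
  shows "Phd k e J a = 0"
  unfolding Phd_def
  by (rule integral_eq_zero_AE) (use mud_AE[OF K e, of J] a in \<open>auto elim!: AE_mp\<close>)

lemma Qd_KC:
  assumes KC: "\<forall>i j. \<bar>(\<Sum>p<i. \<Sum>r<p. k r (j+1)) - (\<Sum>p<i. \<Sum>r<p. k r j)\<bar> \<le> KK"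
  shows "\<bar>Qd k (Suc J) m - Qd k J m\<bar> \<le> KK"
proof -
  have 1: "\<bar>Gd k (Suc J) m - Gd k J m\<bar> \<le> KK"
    unfolding Gd_def using KC[rule_format, of J m] by (simp only: Suc_eq_plus1)
  have 2: "\<bar>Gd k (Suc J) (Suc m) - Gd k J (Suc m)\<bar> \<le> KK"
    unfolding Gd_def using KC[rule_format, of J "Suc m"] by (simp only: Suc_eq_plus1)
  have "Qd k (Suc J) m - Qd k J m = ((Gd k (Suc J) m - Gd k J m) + (Gd k (Suc J) (Suc m) - Gd k J (Suc m))) / 2"
    unfolding Qd_Gd by (simp add: field_simps)
  then show ?thesis using 1 2 by simp
qed

lemma Phd_step:
  assumes K: "condK k" and e: "0 < e"
    and KC: "\<forall>i j. \<bar>(\<Sum>p<i. \<Sum>r<p. k r (j+1)) - (\<Sum>p<i. \<Sum>r<p. k r j)\<bar> \<le> KK"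
  shows "\<bar>Phd k e J a - Phd k e (Suc J) a\<bar> \<le> (KK + 2) * e"
proof (cases "a \<le> 0")
  case True
  have "0 \<le> KK" using KC[rule_format, of 0 0] by simp
  then show ?thesis using Phd_neg[OF K e True] e by simp
next
  case False
  define m where "m = nat \<lfloor>a / e\<rfloor>"
  have "real m = of_int \<lfloor>a / e\<rfloor>" using False e unfolding m_def by simp
  then have "real m \<le> a / e" "a / e < real m + 1" by linarith+
  then have am: "\<bar>a - real m * e\<bar> \<le> e" using e by (auto simp: field_simps)
  have "\<bar>Phd k e J a - Phd k e (Suc J) a\<bar> \<le> \<bar>Phd k e J a - Phd k e J (real m * e)\<bar>
      + \<bar>Phd k e J (real m * e) - Phd k e (Suc J) (real m * e)\<bar>
      + \<bar>Phd k e (Suc J) (real m * e) - Phd k e (Suc J) a\<bar>" by linarith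
  also have "\<dots> \<le> e + KK * e + e"
  proof (intro add_mono)
    show "\<bar>Phd k e J a - Phd k e J (real m * e)\<bar> \<le> e"
      using Phd_lip[OF K e, of J a "real m * e"] am by linarith
    show "\<bar>Phd k e (Suc J) (real m * e) - Phd k e (Suc J) a\<bar> \<le> e"
      using Phd_lip[OF K e, of "Suc J" "real m * e" a] am by linarith
    have "\<bar>Phd k e J (real m * e) - Phd k e (Suc J) (real m * e)\<bar> = e * \<bar>Qd k (Suc J) m - Qd k J m\<bar>"
      using e by (simp add: Phd_grid[OF K e] abs_mult flip: right_diff_distrib abs_minus_commute)
    also have "\<dots> \<le> e * KK" using Qd_KC[OF KC] e by (intro mult_left_mono) auto
    finally show "\<bar>Phd k e J (real m * e) - Phd k e (Suc J) (real m * e)\<bar> \<le> KK * e" by (simp only: mult.commute)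
  qed
  also have "e + KK * e + e = (KK + 2) * e" by (simp add: algebra_simps)
  finally show ?thesis .
qed

lemma Phd_steps:
  assumes K: "condK k" and e: "0 < e"
    and KC: "\<forall>i j. \<bar>(\<Sum>p<i. \<Sum>r<p. k r (j+1)) - (\<Sum>p<i. \<Sum>r<p. k r j)\<bar> \<le> KK"
    and J: "J \<le> J'"
  shows "\<bar>Phd k e J a - Phd k e J' a\<bar> \<le> (KK + 2) * e * (real J' - real J)"
  using J
proof (induction J' rule: dec_induct)
  case base then show ?case by simp
next
  case (step n)
  have "\<bar>Phd k e J a - Phd k e (Suc n) a\<bar> \<le> \<bar>Phd k e J a - Phd k e n a\<bar> + \<bar>Phd k e n a - Phd k e (Suc n) a\<bar>"
    by linarith
  also have "\<dots> \<le> (KK + 2) * e * (real n - real J) + (KK + 2) * e"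
    using step.IH Phd_step[OF K e KC, of n a] by linarith
  also have "(KK + 2) * e * (real n - real J) + (KK + 2) * e = (KK + 2) * e * (real (Suc n) - real J)"
    by (simp add: algebra_simps)
  finally show ?case .
qed


definition Ph :: "(nat \<Rightarrow> nat \<Rightarrow> real) \<Rightarrow> real \<Rightarrow> real \<Rightarrow> real \<Rightarrow> real" where
  "Ph k e y a = Phd k e (nat \<lfloor>y / e\<rfloor>) a"

lemma floor_diff_bound:
  assumes e: "0 < e" and y: "0 \<le> y" "0 \<le> y'"
  shows "e * \<bar>real (nat \<lfloor>y / e\<rfloor>) - real (nat \<lfloor>y' / e\<rfloor>)\<bar> \<le> \<bar>y - y'\<bar> + e"
proof -
  have 1: "real (nat \<lfloor>y / e\<rfloor>) = of_int \<lfloor>y / e\<rfloor>" "real (nat \<lfloor>y' / e\<rfloor>) = of_int \<lfloor>y' / e\<rfloor>"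
    using e y by auto
  have "\<bar>of_int \<lfloor>y / e\<rfloor> - of_int \<lfloor>y' / e\<rfloor>\<bar> \<le> \<bar>y / e - y' / e\<bar> + (1::real)"
    by linarith
  then have "e * \<bar>of_int \<lfloor>y / e\<rfloor> - of_int \<lfloor>y' / e\<rfloor>\<bar> \<le> e * (\<bar>y / e - y' / e\<bar> + 1)"
    using e by (intro mult_left_mono) auto
  also have "e * (\<bar>y / e - y' / e\<bar> + 1) = \<bar>y - y'\<bar> + e"
  proof -
    have "y / e - y' / e = (y - y') / e" by (simp add: diff_divide_distrib)
    then have "e * \<bar>y / e - y' / e\<bar> = \<bar>y - y'\<bar>" using e by (simp add: abs_divide)
    then show ?thesis by (simp add: distrib_left)
  qed
  finally show ?thesis unfolding 1 .
qed

lemma Phd_bound: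
  assumes K: "condK k" and e: "0 < e"
    and KC: "\<forall>i j. \<bar>(\<Sum>p<i. \<Sum>r<p. k r (j+1)) - (\<Sum>p<i. \<Sum>r<p. k r j)\<bar> \<le> KK"
  shows "\<bar>Phd k e J a - Phd k e J' a'\<bar> \<le> \<bar>a - a'\<bar> + (KK + 2) * e * \<bar>real J - real J'\<bar>"
proof -
  have "0 \<le> KK" using KC[rule_format, of 0 0] by simp
  have *: "\<bar>Phd k e J a' - Phd k e J' a'\<bar> \<le> (KK + 2) * e * \<bar>real J - real J'\<bar>"
  proof (cases "J \<le> J'")
    case True then show ?thesis using Phd_steps[OF K e KC True, of a'] by simp
  next
    case False then have "J' \<le> J" by simp
    then show ?thesis using Phd_steps[OF K e KC, of J' J a'] by simp
  qed
  show ?thesis using * Phd_lip[OF K e, of J a a'] by linarith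
qed

lemma Ph_bound:
  assumes K: "condK k" and e: "0 < e" and y: "0 \<le> y" "0 \<le> y'"
    and KC: "\<forall>i j. \<bar>(\<Sum>p<i. \<Sum>r<p. k r (j+1)) - (\<Sum>p<i. \<Sum>r<p. k r j)\<bar> \<le> KK"
  shows "\<bar>Ph k e y a - Ph k e y' a'\<bar> \<le> \<bar>a - a'\<bar> + (KK + 2) * (\<bar>y - y'\<bar> + e)"
proof -
  have "0 \<le> KK" using KC[rule_format, of 0 0] by simp
  have "\<bar>Ph k e y a - Ph k e y' a'\<bar> \<le> \<bar>a - a'\<bar> + (KK + 2) * (e * \<bar>real (nat \<lfloor>y / e\<rfloor>) - real (nat \<lfloor>y' / e\<rfloor>)\<bar>)"
    unfolding Ph_def using Phd_bound[OF K e KC] by (simp add: mult.assoc)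
  also have "\<dots> \<le> \<bar>a - a'\<bar> + (KK + 2) * (\<bar>y - y'\<bar> + e)"
    using floor_diff_bound[OF e y] \<open>0 \<le> KK\<close> by (intro add_left_mono mult_left_mono) auto
  finally show ?thesis .
qed

lemma Ph_abs:
  assumes K: "condK k" and e: "0 < e"
  shows "\<bar>Ph k e y a\<bar> \<le> \<bar>a\<bar>"
  using Phd_lip[OF K e, of "nat \<lfloor>y / e\<rfloor>" a 0] Phd_neg[OF K e, of 0] unfolding Ph_def by simp


lemma diag_countable:
  fixes F :: "nat \<Rightarrow> nat \<Rightarrow> real"
  assumes bdd: "\<And>n. \<exists>B. \<forall>N. \<bar>F N n\<bar> \<le> B"
  shows "\<exists>d. strict_mono d \<and> (\<forall>n. convergent (\<lambda>N. F (d N) n))"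
proof -
  let ?P = "\<lambda>n. \<lambda>s. convergent (\<lambda>N. F (s N) n)"
  interpret nat: subseqs ?P
  proof (unfold convergent_def, unfold subseqs_def, auto)
    fix n :: nat and s :: "nat \<Rightarrow> nat" assume s: "strict_mono s"
    obtain M where M: "\<And>N. \<bar>F N n\<bar> \<le> M" using bdd by blast
    have "bounded {-M..M}"
      using bounded_closed_interval by auto
    moreover have "\<And>N. F (s N) n \<in> {-M..M}"
      using M by (simp add: abs_le_iff minus_le_iff)
    ultimately have "\<exists>l s'. strict_mono s' \<and> ((\<lambda>N. F (s N) n) \<circ> s') \<longlonglongrightarrow> l"
      using compact_Icc compact_imp_seq_compact seq_compactE by metis
    thus "\<exists>s'. strict_mono (s'::nat\<Rightarrow>nat) \<and> (\<exists>l. (\<lambda>N. F (s (s' N)) n) \<longlonglongrightarrow> l)"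
      by (auto simp: comp_def)
  qed
  define d where "d = nat.diagseq"
  have subseq: "strict_mono d"
    unfolding d_def using nat.subseq_diagseq by auto
  have rat_cnv: "?P n d" for n
  proof -
    have Pn_seqseq: "?P n (nat.seqseq (Suc n))"
      by (rule nat.seqseq_holds)
    have 1: "(\<lambda>N. F ((nat.seqseq (Suc n) \<circ> (\<lambda>N. nat.fold_reduce (Suc n) N
      (Suc n + N))) N) n) = (\<lambda>N. F (nat.seqseq (Suc n) N) n) \<circ>
      (\<lambda>N. nat.fold_reduce (Suc n) N (Suc n + N))"
      by auto
    have 2: "?P n (d \<circ> ((+) (Suc n)))"
      unfolding d_def nat.diagseq_seqseq 1
      by (intro convergent_subseq_convergent Pn_seqseq nat.subseq_diagonal_rest)
    then obtain L where 3: "(\<lambda>na. F (d (na + Suc n)) n) \<longlonglongrightarrow> L"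
      by (auto simp: add.commute dest: convergentD)
    then have "(\<lambda>N. F (d N) n) \<longlonglongrightarrow> L"
      by (rule LIMSEQ_offset)
    then show ?thesis
      by (auto simp: convergent_def)
  qed
  show ?thesis using subseq rat_cnv by blast
qed

lemma rat_enum: "\<exists>r :: nat \<Rightarrow> real. range r = \<rat>"
proof -
  obtain m :: "real \<Rightarrow> nat" where "bij_betw m \<rat> UNIV"
    using countable_rat Rats_infinite by (erule countableE_infinite)
  then obtain r :: "nat \<Rightarrow> real" where bij: "bij_betw r UNIV \<rat>"
    using bij_betw_inv by blast
  then show ?thesis by (auto simp: bij_betw_def)
qed

lemma diag_rat2:
  fixes F :: "nat \<Rightarrow> real \<Rightarrow> real \<Rightarrow> real"
  assumes bdd: "\<And>N y a. \<bar>F N y a\<bar> \<le> \<bar>a\<bar>"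
  shows "\<exists>d. strict_mono d \<and> (\<forall>q\<in>\<rat>. \<forall>r\<in>\<rat>. convergent (\<lambda>N. F (d N) q r))"
proof -
  obtain rr :: "nat \<Rightarrow> real" where rr: "range rr = \<rat>" using rat_enum by blast
  define G where "G N n = F N (rr (fst (prod_decode n))) (rr (snd (prod_decode n)))" for N n
  have "\<exists>B. \<forall>N. \<bar>G N n\<bar> \<le> B" for n
    by (rule exI[of _ "\<bar>rr (snd (prod_decode n))\<bar>"]) (simp add: G_def bdd)
  then obtain d where d: "strict_mono d" "\<And>n. convergent (\<lambda>N. G (d N) n)"
    using diag_countable[of G] by blast
  have "convergent (\<lambda>N. F (d N) q r)" if "q \<in> \<rat>" "r \<in> \<rat>" for q r
  proof -
    have "q \<in> range rr" "r \<in> range rr" using that rr by auto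
    then obtain i j where i: "q = rr i" and j: "r = rr j" by blast
    have "G N (prod_encode (i, j)) = F N q r" for N unfolding G_def i j by simp
    then show ?thesis using d(2)[of "prod_encode (i, j)"] by simp
  qed
  then show ?thesis using d(1) by blast
qed


lemma cts_step_hinge: "a < b \<Longrightarrow> cts_step a b x = (max 0 (b - x) - max 0 (a - x)) / (b - a)"
  by (auto simp: cts_step_def field_simps)

lemma cts_step_reflect: assumes "a < b" shows "cts_step a b (c - x) = 1 - cts_step (c - b) (c - a) x"
proof -
  consider "c - x \<le> a" | "b \<le> c - x" | "a < c - x" "c - x < b" by linarith
  then show ?thesis
  proof cases
    case 1 then show ?thesis using assms by (auto simp: cts_step_def)
  next
    case 2 then show ?thesis using assms by (auto simp: cts_step_def)
  next
    case 3
    then have "cts_step a b (c - x) = (b - (c - x)) / (b - a)" by (auto simp: cts_step_def)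
    moreover have "cts_step (c - b) (c - a) x = (c - a - x) / (c - a - (c - b))" using 3 by (auto simp: cts_step_def)
    moreover have "c - a - (c - b) = b - a" by simp
    moreover have "(b - (c - x)) / (b - a) = 1 - (c - a - x) / (b - a)" using assms by (simp add: field_simps)
    ultimately show ?thesis by simp
  qed
qed

lemma cts_step_nonneg: "a < b \<Longrightarrow> 0 \<le> cts_step a b x"
  by (auto simp: cts_step_def field_simps)

lemma cts_step_le1: "a < b \<Longrightarrow> cts_step a b x \<le> 1"
  by (auto simp: cts_step_def field_simps)

lemma cts_step_abs: "a < b \<Longrightarrow> \<bar>cts_step a b x\<bar> \<le> 1"
  using cts_step_nonneg[of a b x] cts_step_le1[of a b x] by linarith

lemma cts_step_isCont: assumes "a < b" shows "isCont (cts_step a b) x"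
proof -
  have "continuous_on UNIV (cts_step a b)"
    by (rule uniformly_continuous_imp_continuous[OF cts_step_uniformly_continuous[OF assms]])
  then show ?thesis by (simp add: continuous_on_eq_continuous_at)
qed

lemma cts_step_meas[measurable]: "cts_step a b \<in> borel_measurable borel"
  unfolding cts_step_def by measurable

lemma hinge_lip: "\<bar>max 0 (b - x) - max 0 (b - y)\<bar> \<le> \<bar>x - (y::real)\<bar>"
  by (auto simp: max_def)

lemma hinge_lip2: "\<bar>max 0 (b + d - x) - max 0 (b - x)\<bar> \<le> \<bar>d::real\<bar>"
  using hinge_lip[of b "x - d" x] by simp

lemma abs_diff_le2: "\<bar>u\<bar> \<le> t \<Longrightarrow> \<bar>v\<bar> \<le> t \<Longrightarrow> \<bar>u - v\<bar> \<le> 2 * (t::real)"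
  by linarith

lemma cts_step_shift:
  assumes "a < b"
  shows "\<bar>cts_step (a + d) (b + d) x - cts_step a b x\<bar> \<le> 2 * \<bar>d\<bar> / (b - a)"
proof -
  have e1: "cts_step (a + d) (b + d) x = (max 0 (b + d - x) - max 0 (a + d - x)) / (b - a)"
    using cts_step_hinge[of "a + d" "b + d" x] assms by simp
  have e2: "cts_step a b x = (max 0 (b - x) - max 0 (a - x)) / (b - a)"
    using cts_step_hinge[of a b x] assms by simp
  have "cts_step (a + d) (b + d) x - cts_step a b x =
     ((max 0 (b + d - x) - max 0 (b - x)) - (max 0 (a + d - x) - max 0 (a - x))) / (b - a)"
    unfolding e1 e2 by (simp add: diff_divide_distrib)
  moreover have "\<bar>(max 0 (b + d - x) - max 0 (b - x)) - (max 0 (a + d - x) - max 0 (a - x))\<bar> \<le> 2 * \<bar>d\<bar>"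
    by (rule abs_diff_le2[OF hinge_lip2 hinge_lip2])
  ultimately show ?thesis using assms by (simp add: abs_divide divide_right_mono)
qed

lemma cdf_cts_step_lim:
  assumes M: "real_distribution M"
  shows "(\<lambda>n. integral\<^sup>L M (cts_step x (x + 1 / Suc n))) \<longlonglongrightarrow> cdf M x"
proof -
  interpret real_distribution M by fact
  have pos: "0 < 1 / real (Suc n)" for n by simp
  have le1: "cdf M x \<le> integral\<^sup>L M (cts_step x (x + 1 / Suc n))" for n
    using cdf_cts_step(1)[of x "x + 1 / Suc n"] pos[of n] by linarith
  have le2: "integral\<^sup>L M (cts_step x (x + 1 / Suc n)) \<le> cdf M (x + 1 / Suc n)" for n
    using cdf_cts_step(2)[of x "x + 1 / Suc n"] pos[of n] by linarith
  have "(\<lambda>n. x + 1 / real (Suc n)) \<longlonglongrightarrow> x"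
    using tendsto_add[OF tendsto_const LIMSEQ_Suc[OF lim_inverse_n']] by simp
  moreover have "continuous (at x within {x<..}) (cdf M)"
    using cdf_is_right_cont[of x] by simp
  ultimately have "(\<lambda>n. cdf M (x + 1 / real (Suc n))) \<longlonglongrightarrow> cdf M x"
  proof -
    assume a1: "(\<lambda>n. x + 1 / real (Suc n)) \<longlonglongrightarrow> x" and a2: "continuous (at x within {x<..}) (cdf M)"
    have "\<forall>n. x + 1 / real (Suc n) \<in> {x<..}" by simp
    moreover have h: "\<forall>s. (\<forall>n. s n \<in> {x<..}) \<and> s \<longlonglongrightarrow> x \<longrightarrow> (\<lambda>n. cdf M (s n)) \<longlonglongrightarrow> cdf M x"
      using a2 unfolding continuous_within_sequentially comp_def by blast
    ultimately show ?thesis using a1 h[rule_format, of "\<lambda>n. x + 1 / real (Suc n)"] by blast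
  qed
  moreover have ev1: "eventually (\<lambda>n. cdf M x \<le> integral\<^sup>L M (cts_step x (x + 1 / Suc n))) sequentially"
    using le1 by (intro always_eventually) blast
  moreover have ev2: "eventually (\<lambda>n. integral\<^sup>L M (cts_step x (x + 1 / Suc n)) \<le> cdf M (x + 1 / Suc n)) sequentially"
    using le2 by (intro always_eventually) blast
  ultimately show ?thesis
    using tendsto_sandwich[OF ev1 ev2 tendsto_const] by blast
qed

lemma cts_step_unique:
  assumes M1: "real_distribution M1" and M2: "real_distribution M2"
    and eq: "\<And>a b. a < b \<Longrightarrow> integral\<^sup>L M1 (cts_step a b) = integral\<^sup>L M2 (cts_step a b)"
  shows "M1 = M2"
proof (rule cdf_unique[OF M1 M2], rule ext)
  fix x
  have "(\<lambda>n. integral\<^sup>L M1 (cts_step x (x + 1 / Suc n))) = (\<lambda>n. integral\<^sup>L M2 (cts_step x (x + 1 / Suc n)))"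
    by (intro ext eq) simp
  moreover have "(\<lambda>n. integral\<^sup>L M1 (cts_step x (x + 1 / Suc n))) \<longlonglongrightarrow> cdf M1 x"
    by (rule cdf_cts_step_lim[OF M1])
  ultimately have l1: "(\<lambda>n. integral\<^sup>L M2 (cts_step x (x + 1 / Suc n))) \<longlonglongrightarrow> cdf M1 x" by simp
  show "cdf M1 x = cdf M2 x"
    using LIMSEQ_unique[OF l1 cdf_cts_step_lim[OF M2, of x]] .
qed

lemma cts_conv_integral:
  fixes g :: "real \<Rightarrow> real"
  assumes nu: "\<And>m. M \<le> m \<Longrightarrow> real_distribution (\<nu> m)" and N: "real_distribution N"
    and conv: "\<And>a b. a < b \<Longrightarrow> (\<lambda>m. integral\<^sup>L (\<nu> m) (cts_step a b)) \<longlonglongrightarrow> integral\<^sup>L N (cts_step a b)"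
    and g: "\<And>x. isCont g x" "\<And>x. \<bar>g x\<bar> \<le> B"
  shows "(\<lambda>m. integral\<^sup>L (\<nu> m) g) \<longlonglongrightarrow> integral\<^sup>L N g"
proof -
  have nu': "\<And>m. real_distribution (\<nu> (m + M))" using nu by simp
  have c: "\<And>a b. a < b \<Longrightarrow> (\<lambda>m. integral\<^sup>L (\<nu> (m + M)) (cts_step a b)) \<longlonglongrightarrow> integral\<^sup>L N (cts_step a b)"
    by (rule LIMSEQ_ignore_initial_segment[OF conv])
  have wc: "weak_conv_m (\<lambda>m. \<nu> (m + M)) N"
    by (rule integral_cts_step_conv_imp_weak_conv[of "\<lambda>m. \<nu> (m + M)" N, OF nu' N c])
  have g2: "\<And>x. norm (g x) \<le> B" using g(2) by simp
  have "(\<lambda>m. integral\<^sup>L (\<nu> (m + M)) g) \<longlonglongrightarrow> integral\<^sup>L N g"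
    by (rule weak_conv_imp_integral_bdd_continuous_conv[of "\<lambda>m. \<nu> (m + M)" N g B, OF nu' N wc g(1) g2])
  then show ?thesis by (rule LIMSEQ_offset)
qed


lemma filterlim_ge_id: "(\<And>m. m \<le> f m) \<Longrightarrow> filterlim (f :: nat \<Rightarrow> nat) sequentially sequentially"
  by (rule filterlim_at_top_mono[OF filterlim_ident]) (auto intro: always_eventually)

lemma ind_reflect:
  fixes e :: real and i J :: nat
  assumes e: "0 < e" and iJ: "i \<le> J"
  shows "indicator {real (J - i) * e .. (real (J - i) + 1) * e} (real (Suc J) * e - x)
       = (indicator {real i * e .. (real i + 1) * e} x :: real)"
proof -
  have r: "real (J - i) = real J - real i" using iJ by simp
  have "(real (Suc J) * e - x \<in> {real (J - i) * e .. (real (J - i) + 1) * e}) \<longleftrightarrow>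
        (x \<in> {real i * e .. (real i + 1) * e})"
    unfolding r by (auto simp: algebra_simps)
  then show ?thesis by (simp add: indicator_def)
qed

lemma mud_reflect:
  fixes g :: "real \<Rightarrow> real"
  assumes K: "condK k" and e: "0 < e" and g[measurable]: "g \<in> borel_measurable borel"
    and B: "\<And>x. \<bar>g x\<bar> \<le> B"
  shows "integral\<^sup>L (mud k e J) (\<lambda>x. g (real (Suc J) * e - x)) = integral\<^sup>L (mud k e J) g"
proof -
  define c where "c = real (Suc J) * e"
  define F where "F m = integral\<^sup>L lborel (\<lambda>x. indicator {real m * e .. (real m + 1) * e} x * g x)" for m :: nat
  have cell: "integral\<^sup>L lborel (\<lambda>x. indicator {real i * e .. (real i + 1) * e} x * g (c - x)) = F (J - i)"
    if "i \<le> J" for i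
  proof -
    have "F (J - i) = \<bar>- 1\<bar> *\<^sub>R integral\<^sup>L lborel (\<lambda>x. indicator {real (J - i) * e .. (real (J - i) + 1) * e} (c + (- 1) * x) * g (c + (- 1) * x))"
      unfolding F_def by (rule lborel_integral_real_affine) simp
    also have "\<dots> = integral\<^sup>L lborel (\<lambda>x. indicator {real i * e .. (real i + 1) * e} x * g (c - x))"
      using ind_reflect[OF e that] unfolding c_def by simp
    finally show ?thesis by simp
  qed
  have L: "integral\<^sup>L (mud k e J) (\<lambda>x. g (c - x)) =
      (\<Sum>i<J. k i J / e * integral\<^sup>L lborel (\<lambda>x. indicator {real i * e .. (real i + 1) * e} x * g (c - x)))"
    by (rule mud_integral[OF K e, where B=B]) (auto simp: B)
  also have "\<dots> = (\<Sum>i<J. k i J / e * F (J - i))"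
    by (intro sum.cong refl) (simp add: cell)
  also have "\<dots> = (\<Sum>i<Suc J. k i J / e * F (J - i))"
    by (rule sum_extend_zero[symmetric]) (auto simp: k_zero[OF K])
  also have "\<dots> = (\<Sum>i<Suc J. k (J - i) J / e * F (J - i))"
  proof (rule sum.cong[OF refl])
    fix i assume "i \<in> {..<Suc J}"
    then have "i \<le> J" by simp
    from k_sym[OF K this] show "k i J / e * F (J - i) = k (J - i) J / e * F (J - i)" by (rule arg_cong)
  qed
  also have "\<dots> = (\<Sum>i<Suc J. k i J / e * F i)"
    using sum.nat_diff_reindex[of "\<lambda>i. k i J / e * F i" "Suc J"] by simp
  also have "\<dots> = (\<Sum>i<J. k i J / e * F i)"
    by (rule sum_extend_zero) (auto simp: k_zero[OF K])
  also have "\<dots> = integral\<^sup>L (mud k e J) g"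
    unfolding F_def by (rule mud_integral[OF K e, where B=B, symmetric]) (auto simp: B)
  finally show ?thesis unfolding c_def .
qed

lemma conv_ext:
  fixes f g :: "real \<Rightarrow> real" and M :: "nat \<Rightarrow> real measure"
  assumes sets: "\<And>n. sets (M n) = sets borel" "sets N = sets borel"
    and AE: "\<And>n. AE x in M n. 0 \<le> x" "AE x in N. 0 \<le> x"
    and gm: "g \<in> borel_measurable borel" and eq: "\<And>x. 0 \<le> x \<Longrightarrow> g x = f x"
    and conv: "(\<lambda>n. integral\<^sup>L (M n) g) \<longlonglongrightarrow> integral\<^sup>L N g"
  shows "(\<lambda>n. integral\<^sup>L (M n) f) \<longlonglongrightarrow> integral\<^sup>L N f"
proof (cases "f \<in> borel_measurable borel")
  case True
  have "integral\<^sup>L (M n) f = integral\<^sup>L (M n) g" for n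
  proof (rule integral_cong_AE)
    show "f \<in> borel_measurable (M n)" "g \<in> borel_measurable (M n)"
      using True gm measurable_cong_sets[OF sets(1)[of n] refl] by auto
    show "AE x in M n. f x = g x" using AE(1)[of n] by (auto elim!: AE_mp simp: eq)
  qed
  moreover have "integral\<^sup>L N f = integral\<^sup>L N g"
  proof (rule integral_cong_AE)
    show "f \<in> borel_measurable N" "g \<in> borel_measurable N"
      using True gm measurable_cong_sets[OF sets(2) refl] by auto
    show "AE x in N. f x = g x" using AE(2) by (auto elim!: AE_mp simp: eq)
  qed
  ultimately show ?thesis using conv by simp
next
  case False
  have "\<not> integrable (M n) f" for n
    using False borel_measurable_integrable measurable_cong_sets[OF sets(1)[of n] refl] by blast
  moreover have "\<not> integrable N f"
    using False borel_measurable_integrable measurable_cong_sets[OF sets(2) refl] by blast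
  ultimately show ?thesis by (simp add: not_integrable_integral_eq)
qed

lemma cont_max0:
  fixes f :: "real \<Rightarrow> real"
  assumes "continuous_on {0..} f"
  shows "continuous_on UNIV (\<lambda>x. f (max x 0))" and "isCont (\<lambda>x. f (max x 0)) x"
proof -
  show c: "continuous_on UNIV (\<lambda>x. f (max x 0))"
    by (rule continuous_on_compose2[OF assms]) (auto intro!: continuous_intros)
  show "isCont (\<lambda>x. f (max x 0)) x"
    using c by (simp add: continuous_on_eq_continuous_at)
qed

lemma bounded_max0:
  fixes f :: "real \<Rightarrow> real"
  assumes "bounded (f ` {0..})"
  obtains B where "\<And>x. \<bar>f (max x 0)\<bar> \<le> B"
proof -
  obtain B where "\<forall>x\<in>f ` {0..}. norm x \<le> B" using assms by (auto simp: bounded_iff)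
  then have "\<bar>f (max x 0)\<bar> \<le> B" for x by auto
  then show ?thesis using that by blast
qed

lemma C0_bounded:
  fixes f :: "real \<Rightarrow> real"
  assumes c: "continuous_on {0..} f" and t: "(f \<longlongrightarrow> 0) at_top"
  shows "bounded (f ` {0..})"
proof -
  obtain N where N: "\<And>x. N \<le> x \<Longrightarrow> \<bar>f x\<bar> < 1"
    using order_tendstoD(2)[OF tendsto_rabs[OF t], of 1] by (auto simp: eventually_at_top_linorder)
  have "compact (f ` {0..max N 0})"
    by (rule compact_continuous_image[OF continuous_on_subset[OF c]]) auto
  then obtain B where B: "\<forall>x\<in>f ` {0..max N 0}. norm x \<le> B" using compact_imp_bounded bounded_iff by metis
  have "\<bar>f x\<bar> \<le> max B 1" if "0 \<le> x" for x
  proof (cases "x \<le> max N 0")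
    case True
    then have "f x \<in> f ` {0..max N 0}" using that by auto
    then have "\<bar>f x\<bar> \<le> B" using B by auto
    then show ?thesis by simp
  next
    case False
    then have "N \<le> x" by simp
    then have "\<bar>f x\<bar> < 1" by (rule N)
    then show ?thesis by simp
  qed
  then show ?thesis unfolding bounded_iff by (intro exI[of _ "max B 1"]) auto
qed

context
  fixes k :: "nat \<Rightarrow> nat \<Rightarrow> real" and KK :: real and eps :: "nat \<Rightarrow> real"
  assumes K: "condK k"
    and KC: "\<forall>i j. \<bar>(\<Sum>p<i. \<Sum>r<p. k r (j+1)) - (\<Sum>p<i. \<Sum>r<p. k r j)\<bar> \<le> KK"
    and eps_pos: "\<And>n. 0 < eps n" and eps_lim: "eps \<longlonglongrightarrow> 0"
    and ratc: "\<And>q r. q \<in> \<rat> \<Longrightarrow> r \<in> \<rat> \<Longrightarrow> convergent (\<lambda>n. Ph k (eps n) q r)"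
begin

lemma KK_nonneg: "0 \<le> KK" using KC[rule_format, of 0 0] by simp

lemma Phb: "0 \<le> y \<Longrightarrow> 0 \<le> y' \<Longrightarrow>
  \<bar>Ph k (eps n) y a - Ph k (eps n) y' a'\<bar> \<le> \<bar>a - a'\<bar> + (KK + 2) * (\<bar>y - y'\<bar> + eps n)"
  by (rule Ph_bound[OF K eps_pos _ _ KC])

lemma Ph_conv: assumes y: "0 \<le> y" shows "convergent (\<lambda>n. Ph k (eps n) y a)"
proof -
  have "Cauchy (\<lambda>n. Ph k (eps n) y a)"
  proof (rule CauchyI)
    fix \<epsilon> :: real assume \<epsilon>: "0 < \<epsilon>"
    define X where "X = 1 + 2 * (KK + 2)"
    define \<delta> where "\<delta> = \<epsilon> / 4 / X"
    have Cpos: "0 < X" using KK_nonneg unfolding X_def by simp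
    have \<delta>: "0 < \<delta>" unfolding \<delta>_def using \<epsilon> Cpos by simp
    have \<delta>eq: "\<delta> * X = \<epsilon> / 4" unfolding \<delta>_def using Cpos by simp
    obtain q where q: "q \<in> \<rat>" "y < q" "q < y + \<delta>" using Rats_dense_in_real[of y "y + \<delta>"] \<delta> by auto
    obtain r where r: "r \<in> \<rat>" "a < r" "r < a + \<delta>" using Rats_dense_in_real[of a "a + \<delta>"] \<delta> by auto
    have q0: "0 \<le> q" using q y by simp
    obtain M1 where M1: "\<And>m n. M1 \<le> m \<Longrightarrow> M1 \<le> n \<Longrightarrow> \<bar>Ph k (eps m) q r - Ph k (eps n) q r\<bar> < \<epsilon> / 2"
      using CauchyD[OF convergent_Cauchy[OF ratc[OF q(1) r(1)]], of "\<epsilon> / 2"] \<epsilon> by auto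
    obtain M2 where M2: "\<And>n. M2 \<le> n \<Longrightarrow> eps n < \<delta>"
      using order_tendstoD(2)[OF eps_lim \<delta>] by (auto simp: eventually_sequentially)
    have close: "\<bar>Ph k (eps n) y a - Ph k (eps n) q r\<bar> \<le> \<epsilon> / 4" if "M2 \<le> n" for n
    proof -
      have "\<bar>Ph k (eps n) y a - Ph k (eps n) q r\<bar> \<le> \<bar>a - r\<bar> + (KK + 2) * (\<bar>y - q\<bar> + eps n)"
        by (rule Phb[OF y q0])
      also have "\<dots> \<le> \<delta> + (KK + 2) * (\<delta> + \<delta>)"
        using q r M2[OF that] KK_nonneg by (intro add_mono mult_left_mono) auto
      also have "\<dots> = \<delta> * X" unfolding X_def by (simp add: algebra_simps)
      also have "\<dots> = \<epsilon> / 4" by (rule \<delta>eq)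
      finally show ?thesis .
    qed
    show "\<exists>M. \<forall>m\<ge>M. \<forall>n\<ge>M. norm (Ph k (eps m) y a - Ph k (eps n) y a) < \<epsilon>"
    proof (intro exI[of _ "max M1 M2"] allI impI)
      fix m n assume "max M1 M2 \<le> m" "max M1 M2 \<le> n"
      then have "\<bar>Ph k (eps m) q r - Ph k (eps n) q r\<bar> < \<epsilon> / 2"
        "\<bar>Ph k (eps m) y a - Ph k (eps m) q r\<bar> \<le> \<epsilon> / 4"
        "\<bar>Ph k (eps n) y a - Ph k (eps n) q r\<bar> \<le> \<epsilon> / 4"
        using M1 close by auto
      then show "norm (Ph k (eps m) y a - Ph k (eps n) y a) < \<epsilon>" unfolding real_norm_def by linarith
    qed
  qed
  then show ?thesis by (simp add: Cauchy_convergent_iff)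
qed

definition Psi :: "real \<Rightarrow> real \<Rightarrow> real" where
  "Psi y a = lim (\<lambda>n. Ph k (eps n) y a)"

lemma Psi_lim: "0 \<le> y \<Longrightarrow> (\<lambda>n. Ph k (eps n) y a) \<longlonglongrightarrow> Psi y a"
  unfolding Psi_def using Ph_conv convergent_LIMSEQ_iff by blast

lemma Ph_gen:
  assumes nn: "filterlim nn sequentially sequentially" and ym: "ym \<longlonglongrightarrow> y" "\<And>m. 0 \<le> ym m" and y: "0 \<le> y"
  shows "(\<lambda>m. Ph k (eps (nn m)) (ym m) a) \<longlonglongrightarrow> Psi y a"
proof -
  have A: "(\<lambda>m. Ph k (eps (nn m)) y a) \<longlonglongrightarrow> Psi y a"
    by (rule filterlim_compose[OF Psi_lim[OF y] nn])
  have e: "(\<lambda>m. eps (nn m)) \<longlonglongrightarrow> 0"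
    by (rule filterlim_compose[OF eps_lim nn])
  have g: "(\<lambda>m. (KK + 2) * (\<bar>ym m - y\<bar> + eps (nn m))) \<longlonglongrightarrow> (KK + 2) * (\<bar>y - y\<bar> + 0)"
    by (intro tendsto_intros ym e)
  have B: "(\<lambda>m. Ph k (eps (nn m)) (ym m) a - Ph k (eps (nn m)) y a) \<longlonglongrightarrow> 0"
  proof (rule Lim_null_comparison)
    show "\<forall>\<^sub>F m in sequentially. norm (Ph k (eps (nn m)) (ym m) a - Ph k (eps (nn m)) y a)
        \<le> (KK + 2) * (\<bar>ym m - y\<bar> + eps (nn m))"
      using Phb[OF ym(2) y, where a=a and a'=a] by (intro always_eventually allI) simp
    show "(\<lambda>m. (KK + 2) * (\<bar>ym m - y\<bar> + eps (nn m))) \<longlonglongrightarrow> 0" using g by simp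
  qed
  have "(\<lambda>m. Ph k (eps (nn m)) y a + (Ph k (eps (nn m)) (ym m) a - Ph k (eps (nn m)) y a)) \<longlonglongrightarrow> Psi y a + 0"
    by (rule tendsto_add[OF A B])
  then show ?thesis by simp
qed

lemma Psi_lip:
  assumes y: "0 \<le> y" "0 \<le> y'"
  shows "\<bar>Psi y a - Psi y' a\<bar> \<le> (KK + 2) * \<bar>y - y'\<bar>"
proof -
  have 1: "(\<lambda>n. \<bar>Ph k (eps n) y a - Ph k (eps n) y' a\<bar>) \<longlonglongrightarrow> \<bar>Psi y a - Psi y' a\<bar>"
    by (intro tendsto_intros Psi_lim y)
  have 2: "(\<lambda>n. (KK + 2) * (\<bar>y - y'\<bar> + eps n)) \<longlonglongrightarrow> (KK + 2) * (\<bar>y - y'\<bar> + 0)"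
    by (intro tendsto_intros eps_lim)
  have 3: "\<forall>\<^sub>F n in sequentially. \<bar>Ph k (eps n) y a - Ph k (eps n) y' a\<bar> \<le> (KK + 2) * (\<bar>y - y'\<bar> + eps n)"
    using Phb[OF y, where a=a and a'=a] by (intro always_eventually allI) simp
  show ?thesis using tendsto_le[OF trivial_limit_sequentially 2 1 3] by simp
qed


definition mu :: "nat \<Rightarrow> real \<Rightarrow> real measure" where
  "mu n y = keps_measure k (eps n) y"

lemma mu_mud: "0 \<le> y \<Longrightarrow> mu n y = mud k (eps n) (nat \<lfloor>y / eps n\<rfloor>)"
  by (simp add: mu_def keps_measure_mud)

lemma sets_mu[simp, measurable_cong]: "sets (mu n y) = sets borel"
  by (simp add: mu_def keps_measure_def)

lemma space_mu[simp]: "space (mu n y) = UNIV"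
  by (simp add: mu_def keps_measure_def)

lemma J_le: assumes "0 \<le> y" shows "real (nat \<lfloor>y / eps n\<rfloor>) * eps n \<le> y"
proof -
  have "real (nat \<lfloor>y / eps n\<rfloor>) = of_int \<lfloor>y / eps n\<rfloor>" using assms eps_pos[of n] by simp
  also have "\<dots> \<le> y / eps n" by linarith
  finally show ?thesis using eps_pos[of n] by (simp add: field_simps)
qed

lemma mu_AE: assumes "0 \<le> y" shows "AE x in mu n y. 0 \<le> x \<and> x \<le> y"
  using mud_AE[OF K eps_pos[of n], where J="nat \<lfloor>y / eps n\<rfloor>"] J_le[OF assms, of n]
  unfolding mu_mud[OF assms] by (auto elim!: AE_mp)

lemma mu_integrable:
  fixes g :: "real \<Rightarrow> real"
  assumes y: "0 \<le> y" and g[measurable]: "g \<in> borel_measurable borel"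
    and B: "\<And>x. 0 \<le> x \<Longrightarrow> x \<le> y \<Longrightarrow> \<bar>g x\<bar> \<le> B"
  shows "integrable (mu n y) g"
  unfolding mu_mud[OF y]
  by (rule mud_integrable[OF K eps_pos[of n] g, where B=B]) (use B J_le[OF y, of n] in auto)

lemma mu_hinge: "0 \<le> y \<Longrightarrow> integral\<^sup>L (mu n y) (\<lambda>x. max 0 (a - x)) = Ph k (eps n) y a"
  unfolding Ph_def Phd_def by (simp add: mu_mud)

lemma mu_cts:
  assumes y: "0 \<le> y" and ab: "a < b"
  shows "integral\<^sup>L (mu n y) (cts_step a b) = (Ph k (eps n) y b - Ph k (eps n) y a) / (b - a)"
proof -
  have int: "integrable (mu n y) (\<lambda>x. max 0 (c - x))" for c
    by (rule mu_integrable[OF y, where B="\<bar>c\<bar>"]) auto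
  have "integral\<^sup>L (mu n y) (cts_step a b) = integral\<^sup>L (mu n y) (\<lambda>x. (max 0 (b - x) - max 0 (a - x)) / (b - a))"
    using ab by (intro Bochner_Integration.integral_cong) (auto simp: cts_step_hinge)
  also have "\<dots> = integral\<^sup>L (mu n y) (\<lambda>x. max 0 (b - x) - max 0 (a - x)) / (b - a)"
    by (rule integral_divide_zero)
  also have "integral\<^sup>L (mu n y) (\<lambda>x. max 0 (b - x) - max 0 (a - x)) =
      integral\<^sup>L (mu n y) (\<lambda>x. max 0 (b - x)) - integral\<^sup>L (mu n y) (\<lambda>x. max 0 (a - x))"
    by (rule Bochner_Integration.integral_diff[OF int int])
  finally show ?thesis using mu_hinge[OF y] ab by simp
qed

lemma J_ge2: assumes "2 * eps n \<le> y" shows "2 \<le> nat \<lfloor>y / eps n\<rfloor>"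
proof -
  have "2 \<le> y / eps n" using assms eps_pos[of n] by (simp add: field_simps)
  then show ?thesis by linarith
qed

lemma mu_rd: assumes "2 * eps n \<le> y" shows "real_distribution (mu n y)"
proof -
  have y: "0 \<le> y" using assms eps_pos[of n] by (smt (verit))
  show ?thesis unfolding mu_mud[OF y] by (rule mud_real_distribution[OF K eps_pos J_ge2[OF assms]])
qed

definition S :: "real \<Rightarrow> real \<Rightarrow> real \<Rightarrow> real" where
  "S y a b = (Psi y b - Psi y a) / (b - a)"

lemma mu_cts_gen:
  assumes nn: "filterlim nn sequentially sequentially" and ym: "ym \<longlonglongrightarrow> y" "\<And>m. 0 \<le> ym m"
    and y: "0 \<le> y" and ab: "a < b"
  shows "(\<lambda>m. integral\<^sup>L (mu (nn m) (ym m)) (cts_step a b)) \<longlonglongrightarrow> S y a b"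
proof -
  have "(\<lambda>m. (Ph k (eps (nn m)) (ym m) b - Ph k (eps (nn m)) (ym m) a) / (b - a)) \<longlonglongrightarrow> S y a b"
    unfolding S_def using ab by (intro tendsto_intros Ph_gen[OF nn ym y]) auto
  then show ?thesis by (simp add: mu_cts[OF ym(2) ab])
qed

definition kk :: "real \<Rightarrow> real measure" where
  "kk y = (SOME \<nu>. real_distribution \<nu> \<and> (\<forall>a b. a < b \<longrightarrow> integral\<^sup>L \<nu> (cts_step a b) = S y a b))"

lemma kk_ex:
  assumes y: "0 < y"
  shows "\<exists>\<nu>. real_distribution \<nu> \<and> (\<forall>a b. a < b \<longrightarrow> integral\<^sup>L \<nu> (cts_step a b) = S y a b)"
proof -
  obtain M where M: "\<And>n. M \<le> n \<Longrightarrow> eps n < y / 2"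
    using order_tendstoD(2)[OF eps_lim, of "y / 2"] y by (auto simp: eventually_sequentially)
  define \<nu>' where "\<nu>' n = mu (n + M) y" for n
  have rd: "real_distribution (\<nu>' n)" for n
    unfolding \<nu>'_def by (rule mu_rd) (use M[of "n + M"] in simp)
  have meas1: "measure (\<nu>' n) {-1<..y} = 1" for n
  proof -
    interpret real_distribution "\<nu>' n" by (rule rd)
    have "AE x in \<nu>' n. x \<in> {-1<..y}"
      using mu_AE[of y "n + M"] y unfolding \<nu>'_def by (auto elim!: AE_mp)
    then show ?thesis by (subst prob_eq_1) auto
  qed
  have tight: "tight \<nu>'"
    unfolding tight_def
  proof (intro conjI allI impI)
    fix n show "real_distribution (\<nu>' n)" by (rule rd)
  next
    fix \<epsilon> :: real assume "0 < \<epsilon>"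
    then show "\<exists>a b. a < b \<and> (\<forall>n. 1 - \<epsilon> < measure (\<nu>' n) {a<..b})"
      using meas1 y by (intro exI[of _ "-1"] exI[of _ y]) auto
  qed
  obtain r N where r: "strict_mono r" and N: "real_distribution N"
    and wc: "weak_conv_m (\<nu>' \<circ> id \<circ> r) N"
    using tight_imp_convergent_subsubsequence[OF tight, of id] by (auto simp: strict_mono_def)
  have "integral\<^sup>L N (cts_step a b) = S y a b" if ab: "a < b" for a b
  proof -
    have rd': "\<And>n. real_distribution ((\<nu>' \<circ> id \<circ> r) n)" using rd by simp
    have l1: "(\<lambda>n. integral\<^sup>L ((\<nu>' \<circ> id \<circ> r) n) (cts_step a b)) \<longlonglongrightarrow> integral\<^sup>L N (cts_step a b)"
      by (rule weak_conv_imp_integral_bdd_continuous_conv[OF rd' N wc, where B=1])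
         (use cts_step_isCont[OF ab] cts_step_abs[OF ab] in auto)
    have nn: "filterlim (\<lambda>m. r m + M) sequentially sequentially"
      by (rule filterlim_ge_id) (use seq_suble[OF r] in \<open>auto intro: le_add1 order_trans\<close>)
    have l2: "(\<lambda>m. integral\<^sup>L (mu (r m + M) y) (cts_step a b)) \<longlonglongrightarrow> S y a b"
      using mu_cts_gen[OF nn tendsto_const _ _ ab, of y] y by simp
    have "(\<lambda>n. integral\<^sup>L ((\<nu>' \<circ> id \<circ> r) n) (cts_step a b)) = (\<lambda>m. integral\<^sup>L (mu (r m + M) y) (cts_step a b))"
      by (simp add: \<nu>'_def)
    with l1 l2 show ?thesis using LIMSEQ_unique by metis
  qed
  then show ?thesis using N by blast
qed

lemma kk_rd: "0 < y \<Longrightarrow> real_distribution (kk y)"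
  unfolding kk_def using someI_ex[OF kk_ex] by blast

lemma kk_cts: "0 < y \<Longrightarrow> a < b \<Longrightarrow> integral\<^sup>L (kk y) (cts_step a b) = S y a b"
  unfolding kk_def using someI_ex[OF kk_ex] by blast

lemma conv_mu:
  fixes g :: "real \<Rightarrow> real"
  assumes nn: "filterlim nn sequentially sequentially" and ym: "ym \<longlonglongrightarrow> y" "\<And>m. 0 \<le> ym m"
    and y: "0 < y" and g: "\<And>x. isCont g x" "\<And>x. \<bar>g x\<bar> \<le> B"
  shows "(\<lambda>m. integral\<^sup>L (mu (nn m) (ym m)) g) \<longlonglongrightarrow> integral\<^sup>L (kk y) g"
proof -
  have e: "(\<lambda>m. eps (nn m)) \<longlonglongrightarrow> 0"
    by (rule filterlim_compose[OF eps_lim nn])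
  have ev1: "eventually (\<lambda>m. eps (nn m) < y / 4) sequentially"
    using order_tendstoD(2)[OF e, of "y / 4"] y by simp
  have ev2: "eventually (\<lambda>m. y / 2 < ym m) sequentially"
    using order_tendstoD(1)[OF ym(1), of "y / 2"] y by simp
  have "eventually (\<lambda>m. 2 * eps (nn m) \<le> ym m) sequentially"
    using ev1 ev2 by eventually_elim simp
  then obtain M where M: "\<And>m. M \<le> m \<Longrightarrow> 2 * eps (nn m) \<le> ym m"
    by (auto simp: eventually_sequentially)
  show ?thesis
  proof (rule cts_conv_integral[where M=M, OF _ kk_rd[OF y] _ g])
    fix m assume "M \<le> m" then show "real_distribution (mu (nn m) (ym m))" by (intro mu_rd M)
  next
    fix a b :: real assume ab: "a < b"
    show "(\<lambda>m. integral\<^sup>L (mu (nn m) (ym m)) (cts_step a b)) \<longlonglongrightarrow> integral\<^sup>L (kk y) (cts_step a b)"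
      using mu_cts_gen[OF nn ym _ ab] y by (simp add: kk_cts[OF y ab])
  qed
qed

lemma Psi_cont:
  assumes ym: "ym \<longlonglongrightarrow> y" "\<And>m. 0 \<le> ym m" and y: "0 \<le> y"
  shows "(\<lambda>m. Psi (ym m) a) \<longlonglongrightarrow> Psi y a"
proof -
  have "(\<lambda>m. Psi (ym m) a - Psi y a) \<longlonglongrightarrow> 0"
  proof (rule Lim_null_comparison)
    show "\<forall>\<^sub>F m in sequentially. norm (Psi (ym m) a - Psi y a) \<le> (KK + 2) * \<bar>ym m - y\<bar>"
      using Psi_lip[OF ym(2) y] by (intro always_eventually allI) simp
    have "(\<lambda>m. (KK + 2) * \<bar>ym m - y\<bar>) \<longlonglongrightarrow> (KK + 2) * \<bar>y - y\<bar>"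
      by (intro tendsto_intros ym)
    then show "(\<lambda>m. (KK + 2) * \<bar>ym m - y\<bar>) \<longlonglongrightarrow> 0" by simp
  qed
  then have "(\<lambda>m. Psi y a + (Psi (ym m) a - Psi y a)) \<longlonglongrightarrow> Psi y a + 0"
    by (intro tendsto_add tendsto_const)
  then show ?thesis by simp
qed

lemma conv_kk:
  fixes g :: "real \<Rightarrow> real"
  assumes ym: "ym \<longlonglongrightarrow> y" "\<And>m. 0 < ym m"
    and y: "0 < y" and g: "\<And>x. isCont g x" "\<And>x. \<bar>g x\<bar> \<le> B"
  shows "(\<lambda>m. integral\<^sup>L (kk (ym m)) g) \<longlonglongrightarrow> integral\<^sup>L (kk y) g"
proof (rule cts_conv_integral[where M=0, OF _ kk_rd[OF y] _ g])
  fix m show "real_distribution (kk (ym m))" by (rule kk_rd[OF ym(2)])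
next
  fix a b :: real assume ab: "a < b"
  have ym0: "\<And>m. 0 \<le> ym m" using ym(2) less_imp_le by blast
  have "(\<lambda>m. S (ym m) a b) \<longlonglongrightarrow> S y a b"
    unfolding S_def using y ab by (intro tendsto_intros Psi_cont[OF ym(1) ym0]) auto
  then show "(\<lambda>m. integral\<^sup>L (kk (ym m)) (cts_step a b)) \<longlonglongrightarrow> integral\<^sup>L (kk y) (cts_step a b)"
    by (simp add: kk_cts[OF y ab] kk_cts[OF ym(2) ab])
qed

lemma kk_cts_mu:
  assumes y: "0 < y" and ab: "a < b"
  shows "(\<lambda>n. integral\<^sup>L (mu n y) (cts_step a b)) \<longlonglongrightarrow> integral\<^sup>L (kk y) (cts_step a b)"
  using mu_cts_gen[OF filterlim_ident tendsto_const _ _ ab, of y] y kk_cts[OF y ab] by simp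

lemma mu_measure1: assumes "2 * eps n \<le> y" shows "measure (mu n y) UNIV = 1"
proof -
  interpret real_distribution "mu n y" by (rule mu_rd[OF assms])
  show ?thesis using prob_space by simp
qed

lemma eventually_rd: assumes y: "0 < y" shows "eventually (\<lambda>n. 2 * eps n \<le> y) sequentially"
proof -
  have "eventually (\<lambda>n. eps n < y / 2) sequentially"
    using order_tendstoD(2)[OF eps_lim, of "y / 2"] y by simp
  then show ?thesis by eventually_elim simp
qed

lemma kk_cdf_low:
  assumes y: "0 < y" and a: "a < 0"
  shows "cdf (kk y) a = 0"
proof -
  interpret real_distribution "kk y" by (rule kk_rd[OF y])
  have ab: "a < a / 2" using a by simp
  have z: "integral\<^sup>L (mu n y) (cts_step a (a / 2)) = 0" for n
  proof (rule integral_eq_zero_AE)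
    show "AE x in mu n y. cts_step a (a / 2) x = 0"
      using mu_AE[of y n] y a by (auto elim!: AE_mp simp: cts_step_def)
  qed
  have "(\<lambda>n. integral\<^sup>L (mu n y) (cts_step a (a / 2))) \<longlonglongrightarrow> integral\<^sup>L (kk y) (cts_step a (a / 2))"
    by (rule kk_cts_mu[OF y ab])
  then have "integral\<^sup>L (kk y) (cts_step a (a / 2)) = 0"
    unfolding z by (simp add: LIMSEQ_const_iff)
  then have "cdf (kk y) a \<le> 0" using cdf_cts_step(1)[OF ab] by simp
  then show ?thesis using cdf_nonneg[of a] by simp
qed

lemma kk_cdf_high:
  assumes y: "0 < y" and b: "y < b"
  shows "cdf (kk y) b = 1"
proof -
  interpret real_distribution "kk y" by (rule kk_rd[OF y])
  have ev: "eventually (\<lambda>n. integral\<^sup>L (mu n y) (cts_step y b) = 1) sequentially"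
    using eventually_rd[OF y]
  proof eventually_elim
    case (elim n)
    have "integral\<^sup>L (mu n y) (cts_step y b) = integral\<^sup>L (mu n y) (\<lambda>x. 1)"
    proof (rule integral_cong_AE)
      show "AE x in mu n y. cts_step y b x = 1"
        using mu_AE[of y n] y by (auto elim!: AE_mp simp: cts_step_def)
    qed auto
    then show ?case using mu_measure1[OF elim] by simp
  qed
  have "(\<lambda>n. integral\<^sup>L (mu n y) (cts_step y b)) \<longlonglongrightarrow> 1"
    by (rule tendsto_eventually[OF ev])
  then have "integral\<^sup>L (kk y) (cts_step y b) = 1"
    using kk_cts_mu[OF y b] LIMSEQ_unique by blast
  then have "1 \<le> cdf (kk y) b" using cdf_cts_step(2)[OF b] by simp
  then show ?thesis using cdf_bounded_prob[of b] by simp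
qed

lemma kk_support:
  assumes y: "0 < y"
  shows "measure (kk y) {0..y} = 1" and "AE x in kk y. 0 \<le> x \<and> x \<le> y"
proof -
  interpret real_distribution "kk y" by (rule kk_rd[OF y])
  have "((cdf (kk y)) \<longlongrightarrow> 0) (at_left 0)"
  proof (rule tendsto_eventually)
    show "eventually (\<lambda>x. cdf (kk y) x = 0) (at_left 0)"
      by (rule eventually_at_leftI[of "-1"]) (auto intro: kk_cdf_low[OF y])
  qed
  then have m0: "measure (kk y) {..<0} = 0"
    using cdf_at_left[of 0] tendsto_unique[OF trivial_limit_at_left_real] by blast
  have "((cdf (kk y)) \<longlongrightarrow> 1) (at_right y)"
  proof (rule tendsto_eventually)
    show "eventually (\<lambda>x. cdf (kk y) x = 1) (at_right y)"
      by (rule eventually_at_rightI[of _ "y + 1"]) (auto intro: kk_cdf_high[OF y])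
  qed
  moreover have "((cdf (kk y)) \<longlongrightarrow> cdf (kk y) y) (at_right y)"
    using cdf_is_right_cont[of y] by (simp add: continuous_within)
  ultimately have "cdf (kk y) y = 1"
    using tendsto_unique[OF trivial_limit_at_right_real] by blast
  then have m1: "measure (kk y) {..y} = 1" by (simp add: cdf_def)
  have "{0..y} = {..y} - {..<0}" by auto
  moreover have "measure (kk y) ({..y} - {..<0}) = measure (kk y) {..y} - measure (kk y) {..<0}"
    by (rule finite_measure_Diff) (use y in \<open>auto simp: subset_eq\<close>)
  ultimately have "measure (kk y) {0..y} = measure (kk y) {..y} - measure (kk y) {..<0}"
    by simp
  then show m: "measure (kk y) {0..y} = 1" using m0 m1 by simp
  have "AE x in kk y. x \<in> {0..y}"
    using m by (subst prob_eq_1[symmetric]) auto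
  then show "AE x in kk y. 0 \<le> x \<and> x \<le> y" by auto
qed

lemma c_close:
  assumes y: "0 \<le> y"
  shows "\<bar>real (Suc (nat \<lfloor>y / eps n\<rfloor>)) * eps n - y\<bar> \<le> eps n"
proof -
  have e: "0 < eps n" by (rule eps_pos)
  have r: "real (nat \<lfloor>y / eps n\<rfloor>) = of_int \<lfloor>y / eps n\<rfloor>" using y e by simp
  have "y / eps n < of_int \<lfloor>y / eps n\<rfloor> + 1" by linarith
  then have 1: "y < (real (nat \<lfloor>y / eps n\<rfloor>) + 1) * eps n" using e unfolding r by (simp add: field_simps)
  have 2: "real (nat \<lfloor>y / eps n\<rfloor>) * eps n \<le> y" by (rule J_le[OF y])
  show ?thesis using 1 2 by (simp add: algebra_simps)
qed

lemma mu_reflect: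
  fixes g :: "real \<Rightarrow> real"
  assumes y: "0 \<le> y" and g[measurable]: "g \<in> borel_measurable borel" and B: "\<And>x. \<bar>g x\<bar> \<le> B"
  shows "integral\<^sup>L (mu n y) (\<lambda>x. g (real (Suc (nat \<lfloor>y / eps n\<rfloor>)) * eps n - x)) = integral\<^sup>L (mu n y) g"
  unfolding mu_mud[OF y] by (rule mud_reflect[OF K eps_pos g B])

lemma sym_err:
  assumes y: "0 \<le> y" and n: "2 * eps n \<le> y" and ab: "a < b"
  shows "\<bar>integral\<^sup>L (mu n y) (cts_step a b) - (1 - integral\<^sup>L (mu n y) (cts_step (y - b) (y - a)))\<bar>
    \<le> 2 * eps n / (b - a)"
proof -
  interpret real_distribution "mu n y" by (rule mu_rd[OF n])
  define c where "c = real (Suc (nat \<lfloor>y / eps n\<rfloor>)) * eps n"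
  have cy: "\<bar>c - y\<bar> \<le> eps n" unfolding c_def by (rule c_close[OF y])
  have ab': "c - b < c - a" "y - b < y - a" using ab by auto
  have int: "integrable (mu n y) (cts_step a' b')" if "a' < b'" for a' b'
    by (rule integrable_const_bound[where B=1]) (use cts_step_abs[OF that] in auto)
  have "integral\<^sup>L (mu n y) (cts_step a b) = integral\<^sup>L (mu n y) (\<lambda>x. cts_step a b (c - x))"
    unfolding c_def by (rule mu_reflect[OF y cts_step_meas cts_step_abs[OF ab], symmetric])
  also have "\<dots> = integral\<^sup>L (mu n y) (\<lambda>x. 1 - cts_step (c - b) (c - a) x)"
    by (intro Bochner_Integration.integral_cong refl) (simp add: cts_step_reflect[OF ab])
  also have "\<dots> = 1 - integral\<^sup>L (mu n y) (cts_step (c - b) (c - a))"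
    using Bochner_Integration.integral_diff[OF integrable_const int[OF ab'(1)], of 1] prob_space by simp
  finally have X: "integral\<^sup>L (mu n y) (cts_step a b) = 1 - integral\<^sup>L (mu n y) (cts_step (c - b) (c - a))" .
  have sh: "\<bar>cts_step (c - b) (c - a) x - cts_step (y - b) (y - a) x\<bar> \<le> 2 * eps n / (b - a)" for x
  proof -
    have "\<bar>cts_step ((y - b) + (c - y)) ((y - a) + (c - y)) x - cts_step (y - b) (y - a) x\<bar>
        \<le> 2 * \<bar>c - y\<bar> / ((y - a) - (y - b))"
      by (rule cts_step_shift[OF ab'(2)])
    also have "\<dots> \<le> 2 * eps n / (b - a)"
      using cy ab by (simp add: divide_right_mono)
    finally show ?thesis by simp
  qed
  have "\<bar>integral\<^sup>L (mu n y) (cts_step (c - b) (c - a)) - integral\<^sup>L (mu n y) (cts_step (y - b) (y - a))\<bar>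
      = \<bar>integral\<^sup>L (mu n y) (\<lambda>x. cts_step (c - b) (c - a) x - cts_step (y - b) (y - a) x)\<bar>"
    by (subst Bochner_Integration.integral_diff[OF int[OF ab'(1)] int[OF ab'(2)]]) simp
  also have "\<dots> \<le> integral\<^sup>L (mu n y) (\<lambda>x. 2 * eps n / (b - a))"
    by (rule integral_abs_bound_integral)
       (auto intro!: Bochner_Integration.integrable_diff int ab' sh)
  also have "\<dots> = 2 * eps n / (b - a)" using prob_space by simp
  finally show ?thesis using X by simp
qed

lemma S_sym:
  assumes y: "0 < y" and ab: "a < b"
  shows "S y a b = 1 - S y (y - b) (y - a)"
proof -
  have ab': "y - b < y - a" using ab by simp
  have X: "(\<lambda>n. integral\<^sup>L (mu n y) (cts_step a b)) \<longlonglongrightarrow> S y a b"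
    using kk_cts_mu[OF y ab] kk_cts[OF y ab] by simp
  have Y: "(\<lambda>n. integral\<^sup>L (mu n y) (cts_step (y - b) (y - a))) \<longlonglongrightarrow> S y (y - b) (y - a)"
    using kk_cts_mu[OF y ab'] kk_cts[OF y ab'] by simp
  have 1: "(\<lambda>n. integral\<^sup>L (mu n y) (cts_step a b) - (1 - integral\<^sup>L (mu n y) (cts_step (y - b) (y - a))))
      \<longlonglongrightarrow> S y a b - (1 - S y (y - b) (y - a))"
    by (intro tendsto_intros X Y)
  have 2: "(\<lambda>n. integral\<^sup>L (mu n y) (cts_step a b) - (1 - integral\<^sup>L (mu n y) (cts_step (y - b) (y - a))))
      \<longlonglongrightarrow> 0"
  proof (rule Lim_null_comparison)
    show "\<forall>\<^sub>F n in sequentially. norm (integral\<^sup>L (mu n y) (cts_step a b) - (1 - integral\<^sup>L (mu n y) (cts_step (y - b) (y - a))))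
        \<le> 2 * eps n / (b - a)"
      using eventually_rd[OF y] by eventually_elim (use sym_err y ab in auto)
    have "(\<lambda>n. 2 * eps n / (b - a)) \<longlonglongrightarrow> 2 * 0 / (b - a)"
      by (intro tendsto_intros eps_lim) (use ab in auto)
    then show "(\<lambda>n. 2 * eps n / (b - a)) \<longlonglongrightarrow> 0" by simp
  qed
  from LIMSEQ_unique[OF 1 2] show ?thesis by simp
qed

lemma kk_sym:
  assumes y: "0 < y"
  shows "distr (kk y) borel (\<lambda>x. y - x) = kk y"
proof -
  interpret real_distribution "kk y" by (rule kk_rd[OF y])
  have rd: "real_distribution (distr (kk y) borel (\<lambda>x. y - x))"
    by (rule real_distribution_distr) simp
  show ?thesis
  proof (rule cts_step_unique[OF rd kk_rd[OF y]])
    fix a b :: real assume ab: "a < b"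
    have ab': "y - b < y - a" using ab by simp
    have int: "integrable (kk y) (cts_step (y - b) (y - a))"
      by (rule integrable_const_bound[where B=1]) (use cts_step_abs[OF ab'] in auto)
    have "integral\<^sup>L (distr (kk y) borel (\<lambda>x. y - x)) (cts_step a b) = integral\<^sup>L (kk y) (\<lambda>x. cts_step a b (y - x))"
      by (rule integral_distr) auto
    also have "\<dots> = integral\<^sup>L (kk y) (\<lambda>x. 1 - cts_step (y - b) (y - a) x)"
      by (intro Bochner_Integration.integral_cong refl) (simp add: cts_step_reflect[OF ab])
    also have "\<dots> = 1 - integral\<^sup>L (kk y) (cts_step (y - b) (y - a))"
      using Bochner_Integration.integral_diff[OF integrable_const int, of 1] prob_space by simp
    also have "\<dots> = 1 - S y (y - b) (y - a)" by (simp add: kk_cts[OF y ab'])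
    also have "\<dots> = S y a b" by (rule S_sym[OF y ab, symmetric])
    also have "\<dots> = integral\<^sup>L (kk y) (cts_step a b)" by (simp add: kk_cts[OF y ab])
    finally show "integral\<^sup>L (distr (kk y) borel (\<lambda>x. y - x)) (cts_step a b) = integral\<^sup>L (kk y) (cts_step a b)" .
  qed
qed

lemma kk_mean:
  assumes y: "0 < y"
  shows "2 * (\<integral>x. x \<partial>(kk y)) = y"
proof -
  interpret real_distribution "kk y" by (rule kk_rd[OF y])
  have int: "integrable (kk y) (\<lambda>x. x)"
  proof (rule integrable_const_bound[where B=y])
    show "AE x in kk y. norm x \<le> y" using kk_support(2)[OF y] by (auto elim!: AE_mp)
  qed simp
  have "(\<integral>x. x \<partial>(kk y)) = (\<integral>x. x \<partial>(distr (kk y) borel (\<lambda>x. y - x)))"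
    by (simp add: kk_sym[OF y])
  also have "\<dots> = (\<integral>x. y - x \<partial>(kk y))"
    by (rule integral_distr) auto
  also have "\<dots> = y - (\<integral>x. x \<partial>(kk y))"
    using Bochner_Integration.integral_diff[OF integrable_const int, of y] prob_space by simp
  finally show ?thesis by simp
qed

lemma part3:
  fixes f :: "real \<Rightarrow> real"
  assumes y: "0 < y" and c: "continuous_on {0..} f" and b: "bounded (f ` {0..})"
  shows "(\<lambda>n. integral\<^sup>L (keps_measure k (eps n) y) f) \<longlonglongrightarrow> integral\<^sup>L (kk y) f"
proof -
  obtain B where B: "\<And>x. \<bar>f (max x 0)\<bar> \<le> B" using bounded_max0[OF b] by blast
  have "(\<lambda>n. integral\<^sup>L (mu n y) f) \<longlonglongrightarrow> integral\<^sup>L (kk y) f"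
  proof (rule conv_ext[where g="\<lambda>x. f (max x 0)"])
    show "\<And>n. sets (mu n y) = sets borel" by simp
    show "sets (kk y) = sets borel" using kk_rd[OF y] real_distribution.events_eq_borel by blast
    show "\<And>n. AE x in mu n y. 0 \<le> x" using mu_AE y by (auto elim!: AE_mp)
    show "AE x in kk y. 0 \<le> x" using kk_support(2)[OF y] by (auto elim!: AE_mp)
    show "(\<lambda>x. f (max x 0)) \<in> borel_measurable borel"
      by (rule borel_measurable_continuous_onI[OF cont_max0(1)[OF c]])
    show "\<And>x. 0 \<le> x \<Longrightarrow> f (max x 0) = f x" by simp
    show "(\<lambda>n. integral\<^sup>L (mu n y) (\<lambda>x. f (max x 0))) \<longlonglongrightarrow> integral\<^sup>L (kk y) (\<lambda>x. f (max x 0))"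
      using conv_mu[OF filterlim_ident tendsto_const _ y cont_max0(2)[OF c] B] y by simp
  qed
  then show ?thesis by (simp add: mu_def)
qed

lemma part2:
  fixes f :: "real \<Rightarrow> real"
  assumes c: "continuous_on {0..} f" and t: "(f \<longlongrightarrow> 0) at_top"
  shows "continuous_on {0<..} (\<lambda>y. \<integral>x. f x \<partial>(kk y))"
proof (rule continuous_on_sequentiallyI)
  fix u :: "nat \<Rightarrow> real" and a assume u: "\<forall>n. u n \<in> {0<..}" and a: "a \<in> {0<..}" and ua: "u \<longlonglongrightarrow> a"
  obtain B where B: "\<And>x. \<bar>f (max x 0)\<bar> \<le> B" using bounded_max0[OF C0_bounded[OF c t]] by blast
  have u0: "\<And>n. 0 < u n" and a0: "0 < a" using u a by auto
  show "(\<lambda>n. integral\<^sup>L (kk (u n)) f) \<longlonglongrightarrow> integral\<^sup>L (kk a) f"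
  proof (rule conv_ext[where g="\<lambda>x. f (max x 0)"])
    show "\<And>n. sets (kk (u n)) = sets borel" using kk_rd[OF u0] real_distribution.events_eq_borel by blast
    show "sets (kk a) = sets borel" using kk_rd[OF a0] real_distribution.events_eq_borel by blast
    show "\<And>n. AE x in kk (u n). 0 \<le> x" using kk_support(2)[OF u0] by (auto elim!: AE_mp)
    show "AE x in kk a. 0 \<le> x" using kk_support(2)[OF a0] by (auto elim!: AE_mp)
    show "(\<lambda>x. f (max x 0)) \<in> borel_measurable borel"
      by (rule borel_measurable_continuous_onI[OF cont_max0(1)[OF c]])
    show "\<And>x. 0 \<le> x \<Longrightarrow> f (max x 0) = f x" by simp
    show "(\<lambda>n. integral\<^sup>L (kk (u n)) (\<lambda>x. f (max x 0))) \<longlonglongrightarrow> integral\<^sup>L (kk a) (\<lambda>x. f (max x 0))"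
      by (rule conv_kk[OF ua u0 a0 cont_max0(2)[OF c] B])
  qed
qed

lemma phi_eps:
  fixes \<phi> :: "real \<Rightarrow> real"
  assumes y: "0 < y" and pm[measurable]: "\<phi> \<in> borel_measurable borel"
  shows "(LINT x:{0..y}|lborel. keps k (eps n) x y * \<phi> x) = integral\<^sup>L (mu n y) \<phi>"
proof -
  define J where "J = nat \<lfloor>y / eps n\<rfloor>"
  have kk': "keps k (eps n) x y = kd k (eps n) J x" for x
    using y unfolding keps_def kd_def J_def by auto
  have Jle: "real J * eps n \<le> y" unfolding J_def by (rule J_le) (use y in simp)
  have "integral\<^sup>L (mu n y) \<phi> = integral\<^sup>L lborel (\<lambda>x. kd k (eps n) J x *\<^sub>R \<phi> x)"
    unfolding mu_mud[OF less_imp_le[OF y]] J_def[symmetric] mud_def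
    by (rule integral_density) (auto simp: kd_nonneg[OF K eps_pos])
  also have "\<dots> = (LINT x:{0..y}|lborel. keps k (eps n) x y * \<phi> x)"
    unfolding set_lebesgue_integral_def
  proof (rule Bochner_Integration.integral_cong[OF refl])
    fix x
    show "kd k (eps n) J x *\<^sub>R \<phi> x = indicator {0..y} x *\<^sub>R (keps k (eps n) x y * \<phi> x)"
    proof (cases "x \<in> {0..y}")
      case True then show ?thesis by (simp add: kk')
    next
      case False
      then have "x < 0 \<or> real J * eps n < x" using Jle by auto
      then have "kd k (eps n) J x = 0" by (rule kd_zero[OF K eps_pos])
      then show ?thesis using False by simp
    qed
  qed
  finally show ?thesis by simp
qed

lemma phi_kk:
  fixes \<phi> :: "real \<Rightarrow> real"
  assumes y: "0 < y" and pm[measurable]: "\<phi> \<in> borel_measurable borel"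
  shows "(LINT x:{0..y}|(kk y). \<phi> x) = integral\<^sup>L (kk y) \<phi>"
proof -
  have s: "sets (kk y) = sets borel" using kk_rd[OF y] real_distribution.events_eq_borel by blast
  show ?thesis
    unfolding set_lebesgue_integral_def
  proof (rule integral_cong_AE)
    have bm: "borel_measurable (kk y) = borel_measurable borel" by (rule measurable_cong_sets[OF s refl])
    show "(\<lambda>x. indicator {0..y} x *\<^sub>R \<phi> x) \<in> borel_measurable (kk y)" "\<phi> \<in> borel_measurable (kk y)"
      unfolding bm by auto
    show "AE x in kk y. indicator {0..y} x *\<^sub>R \<phi> x = \<phi> x"
      using kk_support(2)[OF y] by (auto elim!: AE_mp)
  qed
qed

lemma part4:
  fixes \<phi> :: "real \<Rightarrow> real"
  assumes C: "Cc_infty_pos \<phi>" and R: "0 < R"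
  shows "uniform_limit {0<..R}
          (\<lambda>n y. LINT x:{0..y}|lborel. keps k (eps n) x y * \<phi> x)
          (\<lambda>y. LINT x:{0..y}|(kk y). \<phi> x)
          sequentially"
proof -
  obtain D where D: "D 0 = \<phi>" "\<And>m x. (D m has_real_derivative D (Suc m) x) (at x)"
    using C unfolding Cc_infty_pos_def smooth_fun_def by blast
  obtain a0 b0 where ab0: "0 < a0" "a0 \<le> b0" "\<And>x. x \<notin> {a0..b0} \<Longrightarrow> \<phi> x = 0"
    using C unfolding Cc_infty_pos_def by blast
  have pc: "isCont \<phi> x" for x using DERIV_isCont[OF D(2)[of 0 x]] D(1) by simp
  have pcon: "continuous_on UNIV \<phi>" using pc by (simp add: continuous_at_imp_continuous_on)
  have pm[measurable]: "\<phi> \<in> borel_measurable borel" by (rule borel_measurable_continuous_onI[OF pcon])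
  have "compact (\<phi> ` {a0..b0})"
    by (rule compact_continuous_image[OF continuous_on_subset[OF pcon]]) auto
  then obtain B0 where B0: "\<forall>x\<in>\<phi> ` {a0..b0}. norm x \<le> B0" using compact_imp_bounded bounded_iff by metis
  have pB: "\<bar>\<phi> x\<bar> \<le> max B0 0" for x
  proof (cases "x \<in> {a0..b0}")
    case True then have "\<phi> x \<in> \<phi> ` {a0..b0}" by auto
    then have "norm (\<phi> x) \<le> B0" using B0 by blast
    then show ?thesis by simp
  next
    case False then show ?thesis using ab0(3) by simp
  qed
  let ?S = "{0<..R}"
  have main: "uniform_limit ?S (\<lambda>n y. integral\<^sup>L (mu n y) \<phi>) (\<lambda>y. integral\<^sup>L (kk y) \<phi>) sequentially"
  proof (rule uniform_limitI, rule ccontr)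
    fix \<epsilon> :: real assume \<epsilon>: "0 < \<epsilon>"
    assume "\<not> (\<forall>\<^sub>F n in sequentially. \<forall>y\<in>?S. dist (integral\<^sup>L (mu n y) \<phi>) (integral\<^sup>L (kk y) \<phi>) < \<epsilon>)"
    then have "\<forall>N. \<exists>n\<ge>N. \<exists>y\<in>?S. \<not> dist (integral\<^sup>L (mu n y) \<phi>) (integral\<^sup>L (kk y) \<phi>) < \<epsilon>"
      unfolding not_eventually frequently_sequentially by auto
    then obtain nn yy where nn: "\<And>N. N \<le> nn N" and yy: "\<And>N. yy N \<in> ?S"
      and bad: "\<And>N. \<epsilon> \<le> dist (integral\<^sup>L (mu (nn N) (yy N)) \<phi>) (integral\<^sup>L (kk (yy N)) \<phi>)"
      by (metis not_less)
    have "seq_compact {0..R}" by (rule compact_imp_seq_compact[OF compact_Icc])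
    moreover have "\<forall>N. yy N \<in> {0..R}" using yy by (auto simp: less_imp_le)
    ultimately obtain l r where l: "l \<in> {0..R}" and r: "strict_mono r" and lim: "(yy \<circ> r) \<longlonglongrightarrow> l"
      by (rule seq_compactE)
    have lim': "(\<lambda>m. yy (r m)) \<longlonglongrightarrow> l" using lim by (simp add: comp_def)
    have ypos: "\<And>m. 0 < yy (r m)" using yy by auto
    have nnr: "filterlim (\<lambda>m. nn (r m)) sequentially sequentially"
      by (rule filterlim_ge_id) (use nn seq_suble[OF r] in \<open>auto intro: order_trans\<close>)
    show False
    proof (cases "l = 0")
      case False
      then have l0: "0 < l" using l by auto
      have A: "(\<lambda>m. integral\<^sup>L (mu (nn (r m)) (yy (r m))) \<phi>) \<longlonglongrightarrow> integral\<^sup>L (kk l) \<phi>"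
        by (rule conv_mu[OF nnr lim' less_imp_le[OF ypos] l0 pc pB])
      have Bk: "(\<lambda>m. integral\<^sup>L (kk (yy (r m))) \<phi>) \<longlonglongrightarrow> integral\<^sup>L (kk l) \<phi>"
        by (rule conv_kk[OF lim' ypos l0 pc pB])
      have "(\<lambda>m. dist (integral\<^sup>L (mu (nn (r m)) (yy (r m))) \<phi>) (integral\<^sup>L (kk (yy (r m))) \<phi>))
          \<longlonglongrightarrow> dist (integral\<^sup>L (kk l) \<phi>) (integral\<^sup>L (kk l) \<phi>)"
        by (rule tendsto_dist[OF A Bk])
      then have "eventually (\<lambda>m. dist (integral\<^sup>L (mu (nn (r m)) (yy (r m))) \<phi>) (integral\<^sup>L (kk (yy (r m))) \<phi>) < \<epsilon>) sequentially"
        using order_tendstoD(2) \<epsilon> by fastforce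
      then obtain m where "dist (integral\<^sup>L (mu (nn (r m)) (yy (r m))) \<phi>) (integral\<^sup>L (kk (yy (r m))) \<phi>) < \<epsilon>"
        by (auto simp: eventually_sequentially)
      then show False using bad[of "r m"] by simp
    next
      case True
      then have "eventually (\<lambda>m. yy (r m) < a0) sequentially"
        using order_tendstoD(2)[OF lim', of a0] ab0(1) True by simp
      then obtain m where m: "yy (r m) < a0" by (auto simp: eventually_sequentially)
      define y where "y = yy (r m)"
      have y0: "0 < y" unfolding y_def by (rule ypos)
      have ya: "y < a0" unfolding y_def by (rule m)
      have z1: "integral\<^sup>L (mu (nn (r m)) y) \<phi> = 0"
      proof (rule integral_eq_zero_AE)
        show "AE x in mu (nn (r m)) y. \<phi> x = 0"
          using mu_AE[of y "nn (r m)"] y0 ya ab0(3) by (auto elim!: AE_mp)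
      qed
      have z2: "integral\<^sup>L (kk y) \<phi> = 0"
      proof (rule integral_eq_zero_AE)
        show "AE x in kk y. \<phi> x = 0"
          using kk_support(2)[OF y0] ya ab0(3) by (auto elim!: AE_mp)
      qed
      show False using bad[of "r m"] \<epsilon> z1 z2 unfolding y_def by simp
    qed
  qed
  show ?thesis
  proof (subst uniform_limit_cong')
    show "\<And>n y. y \<in> ?S \<Longrightarrow> (LINT x:{0..y}|lborel. keps k (eps n) x y * \<phi> x) = integral\<^sup>L (mu n y) \<phi>"
      by (rule phi_eps[OF _ pm]) simp
    show "\<And>y. y \<in> ?S \<Longrightarrow> (LINT x:{0..y}|(kk y). \<phi> x) = integral\<^sup>L (kk y) \<phi>"
      by (rule phi_kk[OF _ pm]) simp
  qed (rule main)
qed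
end


theorem mainTheorem3:
  fixes k :: "nat \<Rightarrow> nat \<Rightarrow> real"
  assumes "condK k" and "condKC k"
  shows "\<exists>(eps :: nat \<Rightarrow> real) (kk :: real \<Rightarrow> real measure).
    (\<forall>n. 0 < eps n) \<and> eps \<longlonglongrightarrow> 0 \<and>
    (\<forall>y>0. prob_space (kk y) \<and> sets (kk y) = sets borel) \<and>
    \<comment> \<open>(1)\<close>
    (\<forall>y>0. measure (kk y) {0..y} = 1 \<and>
           distr (kk y) borel (\<lambda>x. y - x) = kk y \<and>
           2 * (\<integral>x. x \<partial>(kk y)) = y) \<and>
    \<comment> \<open>(2) weak-star continuity: against every f in C_0([0,\<infinity>))\<close>
    (\<forall>f :: real \<Rightarrow> real. continuous_on {0..} f \<and> (f \<longlongrightarrow> 0) at_top \<longrightarrow>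
        continuous_on {0<..} (\<lambda>y. \<integral>x. f x \<partial>(kk y))) \<and>
    \<comment> \<open>(3) weak convergence in law\<close>
    (\<forall>y>0. \<forall>f :: real \<Rightarrow> real. continuous_on {0..} f \<and> bounded (f ` {0..}) \<longrightarrow>
        (\<lambda>n. \<integral>x. f x \<partial>(keps_measure k (eps n) y)) \<longlonglongrightarrow> (\<integral>x. f x \<partial>(kk y))) \<and>
    \<comment> \<open>(4) uniform convergence on compacts\<close>
    (\<forall>\<phi>. Cc_infty_pos \<phi> \<longrightarrow> (\<forall>R>0.
        uniform_limit {0<..R}
          (\<lambda>n y. LINT x:{0..y}|lborel. keps k (eps n) x y * \<phi> x)
          (\<lambda>y. LINT x:{0..y}|(kk y). \<phi> x)
          sequentially))"
proof -
  note K = assms(1)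
  obtain KK where KC: "\<forall>i j. \<bar>(\<Sum>p<i. \<Sum>r<p. k r (j+1)) - (\<Sum>p<i. \<Sum>r<p. k r j)\<bar> \<le> KK"
    using assms(2) unfolding condKC_def by blast
  define F where "F N y a = Ph k (1 / (real N + 1)) y a" for N y a
  have "\<And>N y a. \<bar>F N y a\<bar> \<le> \<bar>a\<bar>" unfolding F_def by (rule Ph_abs[OF K]) simp
  then obtain d where d: "strict_mono d" "\<forall>q\<in>\<rat>. \<forall>r\<in>\<rat>. convergent (\<lambda>N. F (d N) q r)"
    using diag_rat2 by blast
  define eps where "eps n = 1 / (real (d n) + 1)" for n
  have eps_pos: "\<And>n. 0 < eps n" unfolding eps_def by simp
  have eps_lim: "eps \<longlonglongrightarrow> 0"
  proof (rule tendsto_sandwich[of "\<lambda>n. 0" _ _ "\<lambda>n. 1 / real (Suc n)"])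
    show "\<forall>\<^sub>F n in sequentially. 0 \<le> eps n" using eps_pos by (intro always_eventually) (simp add: less_imp_le)
    have "eps n \<le> 1 / real (Suc n)" for n
    proof -
      have "real (Suc n) \<le> real (d n) + 1" using seq_suble[OF d(1), of n] by simp
      then show ?thesis unfolding eps_def by (intro divide_left_mono) auto
    qed
    then show "\<forall>\<^sub>F n in sequentially. eps n \<le> 1 / real (Suc n)" by (intro always_eventually) blast
    show "(\<lambda>n. 0) \<longlonglongrightarrow> (0::real)" by simp
    show "(\<lambda>n. 1 / real (Suc n)) \<longlonglongrightarrow> 0" using LIMSEQ_Suc[OF lim_inverse_n'] by simp
  qed
  have ratc: "\<And>q r. q \<in> \<rat> \<Longrightarrow> r \<in> \<rat> \<Longrightarrow> convergent (\<lambda>n. Ph k (eps n) q r)"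
    using d(2) unfolding F_def eps_def by simp
  note ctx = K KC eps_pos eps_lim ratc
  have P0: "\<forall>y>0. prob_space (kk k eps y) \<and> sets (kk k eps y) = sets borel"
    using kk_rd[OF ctx] unfolding real_distribution_def real_distribution_axioms_def by blast
  have P1: "\<forall>y>0. measure (kk k eps y) {0..y} = 1 \<and>
           distr (kk k eps y) borel (\<lambda>x. y - x) = kk k eps y \<and>
           2 * (\<integral>x. x \<partial>(kk k eps y)) = y"
    using kk_support(1)[OF ctx] kk_sym[OF ctx] kk_mean[OF ctx] by blast
  have P2: "\<forall>f :: real \<Rightarrow> real. continuous_on {0..} f \<and> (f \<longlongrightarrow> 0) at_top \<longrightarrow>
        continuous_on {0<..} (\<lambda>y. \<integral>x. f x \<partial>(kk k eps y))"
    using part2[OF ctx] by blast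
  have P3: "\<forall>y>0. \<forall>f :: real \<Rightarrow> real. continuous_on {0..} f \<and> bounded (f ` {0..}) \<longrightarrow>
        (\<lambda>n. \<integral>x. f x \<partial>(keps_measure k (eps n) y)) \<longlonglongrightarrow> (\<integral>x. f x \<partial>(kk k eps y))"
    using part3[OF ctx] by blast
  have P4: "\<forall>\<phi>. Cc_infty_pos \<phi> \<longrightarrow> (\<forall>R>0.
        uniform_limit {0<..R}
          (\<lambda>n y. LINT x:{0..y}|lborel. keps k (eps n) x y * \<phi> x)
          (\<lambda>y. LINT x:{0..y}|(kk k eps y). \<phi> x)
          sequentially)"
    using part4[OF ctx] by blast
  show ?thesis
    apply (rule exI[of _ eps])
    apply (rule exI[of _ "kk k eps"])
    using eps_pos eps_lim P0 P1 P2 P3 P4 by blast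
qed


end
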